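(* Suppose Assumption 1 holds. For $\ell\in\{1,\dots,\mathsf{L}\}$ let $Y_\ell\in L_2(\mathsf{X}^2,\nu_\ell)$, set $g_\ell(\bm\theta)=Y_\ell(\bm\theta)-\int_{\mathsf{X}^2}Y_\ell\,\mathrm{d}\nu_\ell$, and let the Markov chain $(\bm\theta^n_\ell)_{n\ge0}$ with kernel $\bm p_\ell$ be started from a probability measure $\nu^0$ on $\mathsf{X}^2$ with $\nu^0\ll\nu_\ell$ and $\frac{\mathrm{d}\nu^0}{\mathrm{d}\nu_\ell}\in L_\infty(\mathsf{X}^2,\nu_\ell)$. For $N_\ell\in\mathbb{N}$, $n_{b,\ell}\in\mathbb{N}$ let $\hat Y_{\ell,N_\ell,n_{b,\ell}}=\frac1{N_\ell}\sum_{n=1}^{N_\ell}Y_\ell(\bm\theta_\ell^{n+n_{b,\ell}})$. Then $$\mathrm{MSE}(\hat Y_{\ell,N_\ell,n_{b,\ell}};\nu^0):=\mathsf{E}_{\nu^0,\bm P_\ell}\Big|\frac1{N_\ell}\sum_{n=1}^{N_\ell}g_\ell(\bm\theta_\ell^{n+n_{b,\ell}})\Big|^2\le C_{\mathrm{mse},\ell}\frac{\mathbb{V}_{\nu_\ell}[Y_\ell]}{N_\ell},$$ where $C_{\mathrm{mse},\ell}=C_{\mathrm{inv},\ell}+C_{\mathrm{ns},\ell}$ with $C_{\mathrm{inv},\ell}=1+\frac{4}{\gamma_{\mathrm{ps}}[\bm P_\ell]}$ and $C_{\mathrm{ns},\ell}=2\big\|\frac{\mathrm{d}\nu^0}{\mathrm{d}\nu_\ell}-1\big\|_{L_\infty}\big(1+\frac4{\gamma_{\mathrm{ps}}[\bm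 P_\ell]}\big)$.
   Context: Setting: $\mathsf{X}$ separable Banach space, prior $\mu_{\mathrm{pr}}$; posteriors $\mu^y_j$ with $\mu_{\mathrm{pr}}$-densities $\pi^y_j$; proposal density $Q_\ell$ w.r.t. $\mu_{\mathrm{pr}}$; $\alpha_j(\theta,z)=\min\{1,\frac{\pi^y_j(z)Q_\ell(\theta)}{\pi^y_j(\theta)Q_\ell(z)}\}$. Joint kernel for $\bm\theta_\ell=(\theta_{\ell,\ell-1},\theta_{\ell,\ell})$: $\bm p_\ell(\bm\theta_\ell,A)=\int\min\{\alpha_{\ell-1}(\theta_{\ell,\ell-1},z),\alpha_\ell(\theta_{\ell,\ell},z)\}\mathbf 1_{\{(z,z)\in A\}}Q_\ell(z)\mu_{\mathrm{pr}}(\mathrm{d}z)+\int(\alpha_{\ell-1}(\theta_{\ell,\ell-1},z)-\alpha_\ell(\theta_{\ell,\ell},z))^+\mathbf 1_{\{(z,\theta_{\ell,\ell})\in A\}}Q_\ell(z)\mu_{\mathrm{pr}}(\mathrm{d}z)+\int(\alpha_\ell(\theta_{\ell,\ell},z)-\alpha_{\ell-1}(\theta_{\ell,\ell-1},z))^+\mathbf 1_{\{(\theta_{\ell,\ell-1},z)\in A\}}Q_\ell(z)\mu_{\mathrm{pr}}(\mathrm{d}z)+\mathbf 1_{\{\bm\theta_\ell\in A\}}(1-\int\max\{\alpha_{\ell-1}(\theta_{\ell,\ell-1},z),\alpha_\ell(\theta_{\ell,\ell},z)\}Q_\ell(z)\mu_{\mathrm{pr}}(\mathrm{d}z))$, with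 operator $\bm P_\ell$ and unique invariant probability measure $\nu_\ell$ (under Assumption 1). $\mathsf{E}_{\nu^0,\bm P_\ell}$ is expectation over the chain with $\bm\theta^0_\ell\sim\nu^0$, $\bm\theta^n_\ell\sim\bm p_\ell(\bm\theta^{n-1}_\ell,\cdot)$; $\mathbb{V}_{\nu_\ell}$ is variance under $\nu_\ell$. Spectral quantities: $L_2^0=L_2^0(\mathsf{X}^2,\nu_\ell)$ is the subspace of $f\in L_2(\mathsf{X}^2,\nu_\ell)$ with $\int f\mathrm{d}\nu_\ell=0$; for a Markov operator $P$ on $L_2$, $\gamma_2[P]=1-\|P\|_{L_2^0\to L_2^0}$; $\bm P_\ell^*$ is the $L_2(\nu_\ell)$-adjoint of $\bm P_\ell$; the pseudo-spectral gap is $\gamma_{\mathrm{ps}}[\bm P_\ell]=\max_{k\ge1,k\in\mathbb{N}}\gamma_2[(\bm P_\ell^* )^k\bm P_\ell^k]/k$. Assumption 1: (1.1) $Q_\ell$ continuous and positive; (1.2) each $\pi^y_j$ continuous and positive; (1.3) for $j=\ell-1,\ell$, all $c_r>0$, $\{\theta: Q_\ell(\theta)/\pi^y_j(\theta)\le c_r\}$ compact; (1.4) $\exists c\in(0,1)$ independent of $\ell$ with $\operatorname{ess\,inf}_z Q_\ell(z)/\pi^y_j(z)\ge c$; (1.5) $\exists r>1,C_r$ independent of $\ell$ with $\int Q_\ell^r\mathrm{d}\mu_{\mathrm{pr}}\le C_r$. *)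

theory Defs
  imports "HOL-Probability.Probability"
begin

definition mh_alpha :: "('a \<Rightarrow> real) \<Rightarrow> ('a \<Rightarrow> real) \<Rightarrow> 'a \<Rightarrow> 'a \<Rightarrow> real" where
  "mh_alpha pij Q \<theta> z = min 1 ((pij z * Q \<theta>) / (pij \<theta> * Q z))"

text \<open>The coupled joint kernel p_l on X^2; pi0 = pi_(l-1), pi1 = pi_l, Q = Q_l,
  mu = prior.  Written literally as the set function A |-> p_l(theta,A) on the Borel sets.\<close>
definition coupled_kernel ::
  "'a::topological_space measure \<Rightarrow> ('a \<Rightarrow> real) \<Rightarrow> ('a \<Rightarrow> real) \<Rightarrow> ('a \<Rightarrow> real)
    \<Rightarrow> 'a \<times> 'a \<Rightarrow> ('a \<times> 'a) measure" where
  "coupled_kernel mu Q pi0 pi1 = (\<lambda>(\<theta>0, \<theta>1).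
     measure_of UNIV (sets (borel :: ('a \<times> 'a) measure)) (\<lambda>A. ennreal (
        (\<integral>z. min (mh_alpha pi0 Q \<theta>0 z) (mh_alpha pi1 Q \<theta>1 z) * indicator A (z, z) * Q z \<partial>mu)
      + (\<integral>z. max 0 (mh_alpha pi0 Q \<theta>0 z - mh_alpha pi1 Q \<theta>1 z) * indicator A (z, \<theta>1) * Q z \<partial>mu)
      + (\<integral>z. max 0 (mh_alpha pi1 Q \<theta>1 z - mh_alpha pi0 Q \<theta>0 z) * indicator A (\<theta>0, z) * Q z \<partial>mu)
      + indicator A (\<theta>0, \<theta>1) *
          (1 - (\<integral>z. max (mh_alpha pi0 Q \<theta>0 z) (mh_alpha pi1 Q \<theta>1 z) * Q z \<partial>mu)))))"

definition markov_op :: "('b \<Rightarrow> 'b measure) \<Rightarrow> ('b \<Rightarrow> real) \<Rightarrow> 'b \<Rightarrow> real" where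
  "markov_op K f x = (\<integral>y. f y \<partial>(K x))"

definition invariant_prob :: "'b measure \<Rightarrow> ('b \<Rightarrow> 'b measure) \<Rightarrow> 'b measure \<Rightarrow> bool" where
  "invariant_prob S K \<nu> \<longleftrightarrow> prob_space \<nu> \<and> sets \<nu> = sets S \<and>
     (\<forall>A \<in> sets S. emeasure \<nu> A = (\<integral>\<^sup>+x. emeasure (K x) A \<partial>\<nu>))"

definition L2_0 :: "'b measure \<Rightarrow> ('b \<Rightarrow> real) set" where
  "L2_0 \<nu> = {f. f \<in> borel_measurable \<nu> \<and> integrable \<nu> (\<lambda>x. (f x)\<^sup>2) \<and> (\<integral>x. f x \<partial>\<nu>) = 0}"

definition L2_norm :: "'b measure \<Rightarrow> ('b \<Rightarrow> real) \<Rightarrow> real" where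
  "L2_norm \<nu> f = sqrt (\<integral>x. (f x)\<^sup>2 \<partial>\<nu>)"

definition L2_inner :: "'b measure \<Rightarrow> ('b \<Rightarrow> real) \<Rightarrow> ('b \<Rightarrow> real) \<Rightarrow> real" where
  "L2_inner \<nu> f g = (\<integral>x. f x * g x \<partial>\<nu>)"

text \<open>Norm on L_2^0 of the operator (P^*)^k P^k, computed through its bilinear form:
  <(P^*)^k P^k f, g> = <P^k f, P^k g> (defining property of the adjoint), and
  ||A|| = sup over unit f, g in L_2^0 of |<A f, g>| (A maps L_2^0 into itself).\<close>
definition adjpow_norm :: "'b measure \<Rightarrow> ('b \<Rightarrow> 'b measure) \<Rightarrow> nat \<Rightarrow> real" where
  "adjpow_norm \<nu> K k = (SUP fg \<in> {(f, g). f \<in> L2_0 \<nu> \<and> g \<in> L2_0 \<nu> \<and> L2_norm \<nu> f \<le> 1 \<and> L2_norm \<nu> g \<le> 1}.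
      \<bar>L2_inner \<nu> ((markov_op K ^^ k) (fst fg)) ((markov_op K ^^ k) (snd fg))\<bar>)"

definition gamma2_adjpow :: "'b measure \<Rightarrow> ('b \<Rightarrow> 'b measure) \<Rightarrow> nat \<Rightarrow> real" where
  "gamma2_adjpow \<nu> K k = 1 - adjpow_norm \<nu> K k"

definition pseudo_gap :: "'b measure \<Rightarrow> ('b \<Rightarrow> 'b measure) \<Rightarrow> real" where
  "pseudo_gap \<nu> K = (SUP k \<in> {1..}. gamma2_adjpow \<nu> K k / real k)"

primrec chain_path :: "'b measure \<Rightarrow> 'b measure \<Rightarrow> ('b \<Rightarrow> 'b measure) \<Rightarrow> nat \<Rightarrow> (nat \<Rightarrow> 'b) measure" where
  "chain_path S M0 K 0 = distr M0 (PiM {..0} (\<lambda>_. S)) (\<lambda>x. \<lambda>i\<in>{..0}. x)"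
| "chain_path S M0 K (Suc n) = bind (chain_path S M0 K n)
     (\<lambda>\<omega>. distr (K (\<omega> n)) (PiM {..Suc n} (\<lambda>_. S)) (\<lambda>y. fun_upd \<omega> (Suc n) y))"

end

theory Submission
  imports Defs
begin

lemma abs_mult_le_sq: "\<bar>a * b\<bar> \<le> a\<^sup>2 + (b::real)\<^sup>2"
proof -
  have "0 \<le> (\<bar>a\<bar> - \<bar>b\<bar>)\<^sup>2" by simp
  then have "2 * (\<bar>a\<bar> * \<bar>b\<bar>) \<le> \<bar>a\<bar>\<^sup>2 + \<bar>b\<bar>\<^sup>2" by (simp add: power2_diff)
  moreover have "0 \<le> \<bar>a\<bar> * \<bar>b\<bar>" by simp
  moreover have "\<bar>a * b\<bar> = \<bar>a\<bar> * \<bar>b\<bar>" by (simp add: abs_mult)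
  moreover have "\<bar>a\<bar>\<^sup>2 = a\<^sup>2" "\<bar>b\<bar>\<^sup>2 = b\<^sup>2" by simp_all
  ultimately show ?thesis by linarith
qed

lemma cs_real:
  fixes f g :: "'b \<Rightarrow> real"
  assumes [measurable]: "f \<in> borel_measurable M" "g \<in> borel_measurable M"
    and fi: "integrable M (\<lambda>x. (f x)\<^sup>2)" and gi: "integrable M (\<lambda>x. (g x)\<^sup>2)"
  shows "integrable M (\<lambda>x. f x * g x)"
    and "\<bar>\<integral>x. f x * g x \<partial>M\<bar> \<le> sqrt (\<integral>x. (f x)\<^sup>2 \<partial>M) * sqrt (\<integral>x. (g x)\<^sup>2 \<partial>M)"
proof -
  show fg: "integrable M (\<lambda>x. f x * g x)"
  proof (rule Bochner_Integration.integrable_bound[where f="\<lambda>x. (f x)\<^sup>2 + (g x)\<^sup>2"])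
    show "integrable M (\<lambda>x. (f x)\<^sup>2 + (g x)\<^sup>2)" using fi gi by simp
    show "AE x in M. norm (f x * g x) \<le> norm ((f x)\<^sup>2 + (g x)\<^sup>2)"
    proof (rule AE_I2)
      fix x
      have "\<bar>f x * g x\<bar> \<le> (f x)\<^sup>2 + (g x)\<^sup>2" by (rule abs_mult_le_sq)
      also have "\<dots> \<le> \<bar>(f x)\<^sup>2 + (g x)\<^sup>2\<bar>" by simp
      finally show "norm (f x * g x) \<le> norm ((f x)\<^sup>2 + (g x)\<^sup>2)" by (simp only: real_norm_def)
    qed
  qed simp
  define A where "A = (\<integral>x. (f x)\<^sup>2 \<partial>M)"
  define B where "B = (\<integral>x. (g x)\<^sup>2 \<partial>M)"
  define C where "C = (\<integral>x. f x * g x \<partial>M)"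
  have A0: "0 \<le> A" "0 \<le> B" unfolding A_def B_def by auto
  have quad: "0 \<le> A + 2 * t * C + t\<^sup>2 * B" for t
  proof -
    have "0 \<le> (\<integral>x. (f x + t * g x)\<^sup>2 \<partial>M)" by simp
    also have "(\<integral>x. (f x + t * g x)\<^sup>2 \<partial>M) = (\<integral>x. (f x)\<^sup>2 + 2 * t * (f x * g x) + t\<^sup>2 * (g x)\<^sup>2 \<partial>M)"
      by (rule Bochner_Integration.integral_cong) (auto simp: power2_eq_square algebra_simps)
    also have "\<dots> = A + 2 * t * C + t\<^sup>2 * B"
      using fi gi fg unfolding A_def B_def C_def by simp
    finally show ?thesis .
  qed
  have "C\<^sup>2 \<le> A * B"
  proof (cases "B = 0")
    case True
    show ?thesis
    proof (rule ccontr)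
      assume "\<not> C\<^sup>2 \<le> A * B"
      then have "C \<noteq> 0" using True by simp
      have "0 \<le> A + 2 * (- (A + 1) / (2 * C)) * C" using quad[of "- (A + 1) / (2 * C)"] True by simp
      also have "\<dots> = -1" using \<open>C \<noteq> 0\<close> by (simp add: field_simps)
      finally show False by simp
    qed
  next
    case False
    then have Bp: "B > 0" using A0 by simp
    have "0 \<le> A + 2 * (- C / B) * C + (- C / B)\<^sup>2 * B" by (rule quad)
    also have "\<dots> = A - C\<^sup>2 / B" using Bp by (simp add: field_simps power2_eq_square)
    finally have "C\<^sup>2 / B \<le> A" by simp
    then show ?thesis using Bp by (simp add: field_simps)
  qed
  then have "sqrt (C\<^sup>2) \<le> sqrt (A * B)" by (rule real_sqrt_le_mono)
  then show "\<bar>C\<bar> \<le> sqrt A * sqrt B" by (simp add: real_sqrt_mult)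
qed


lemma integral_bind_nonneg:
  fixes G :: "_ \<Rightarrow> real"
  assumes \<kappa>[measurable]: "\<kappa> \<in> M \<rightarrow>\<^sub>M subprob_algebra B" and G[measurable]: "G \<in> borel_measurable B"
    and nn: "\<And>y. 0 \<le> G y" and ne: "space M \<noteq> {}"
    and fin: "(\<integral>\<^sup>+ y. ennreal (G y) \<partial>(M \<bind> \<kappa>)) < \<infinity>"
  shows "AE x in M. (\<integral>\<^sup>+ y. ennreal (G y) \<partial>\<kappa> x) < \<infinity>"
    and "integrable M (\<lambda>x. \<integral>y. G y \<partial>\<kappa> x)"
    and "(\<integral>y. G y \<partial>(M \<bind> \<kappa>)) = (\<integral>x. (\<integral>y. G y \<partial>\<kappa> x) \<partial>M)"
proof -
  define H where "H x = (\<integral>\<^sup>+ y. ennreal (G y) \<partial>\<kappa> x)" for x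
  have Hm[measurable]: "H \<in> borel_measurable M"
    unfolding H_def by measurable
  have eq: "(\<integral>\<^sup>+ y. ennreal (G y) \<partial>(M \<bind> \<kappa>)) = (\<integral>\<^sup>+ x. H x \<partial>M)"
    unfolding H_def by (rule nn_integral_bind[OF _ \<kappa>]) simp
  have Hfin: "(\<integral>\<^sup>+ x. H x \<partial>M) \<noteq> \<infinity>" using fin eq by simp
  have ae: "AE x in M. H x \<noteq> \<infinity>" by (rule nn_integral_PInf_AE[OF Hm Hfin])
  then show "AE x in M. (\<integral>\<^sup>+ y. ennreal (G y) \<partial>\<kappa> x) < \<infinity>"
    unfolding H_def by (simp add: less_top)
  have int_eq: "(\<integral>y. G y \<partial>\<kappa> x) = enn2real (H x)" if "x \<in> space M" for x
    unfolding H_def by (rule integral_eq_nn_integral)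
      (auto simp: nn measurable_cong_sets[OF subprob_measurableD(2)[OF \<kappa> that] refl])
  have ae2: "AE x in M. ennreal (enn2real (H x)) = H x"
    using ae by eventually_elim (simp add: less_top)
  have nnH: "(\<integral>\<^sup>+ x. ennreal (enn2real (H x)) \<partial>M) = (\<integral>\<^sup>+ x. H x \<partial>M)"
    by (rule nn_integral_cong_AE[OF ae2])
  have "integrable M (\<lambda>x. enn2real (H x))"
  proof (rule integrableI_nonneg)
    show "(\<integral>\<^sup>+ x. ennreal (enn2real (H x)) \<partial>M) < \<infinity>" using Hfin by (simp add: nnH less_top)
  qed auto
  then show "integrable M (\<lambda>x. \<integral>y. G y \<partial>\<kappa> x)"
    by (rule Bochner_Integration.integrable_cong[THEN iffD1, rotated -1]) (auto simp: int_eq)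
  have sb: "sets (M \<bind> \<kappa>) = sets B"
    by (rule sets_bind[OF subprob_measurableD(2)[OF \<kappa>] ne])
  have "(\<integral>y. G y \<partial>(M \<bind> \<kappa>)) = enn2real (\<integral>\<^sup>+ y. ennreal (G y) \<partial>(M \<bind> \<kappa>))"
    by (rule integral_eq_nn_integral) (auto simp: nn measurable_cong_sets[OF sb refl])
  also have "\<dots> = enn2real (\<integral>\<^sup>+ x. ennreal (enn2real (H x)) \<partial>M)" by (simp add: eq nnH)
  also have "\<dots> = (\<integral>x. enn2real (H x) \<partial>M)"
    by (rule integral_eq_nn_integral[symmetric]) auto
  also have "\<dots> = (\<integral>x. (\<integral>y. G y \<partial>\<kappa> x) \<partial>M)"
    by (rule Bochner_Integration.integral_cong) (auto simp: int_eq)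
  finally show "(\<integral>y. G y \<partial>(M \<bind> \<kappa>)) = (\<integral>x. (\<integral>y. G y \<partial>\<kappa> x) \<partial>M)" .
qed

lemma integral_bind_gen:
  fixes F :: "_ \<Rightarrow> real"
  assumes \<kappa>[measurable]: "\<kappa> \<in> M \<rightarrow>\<^sub>M subprob_algebra B" and F[measurable]: "F \<in> borel_measurable B"
    and ne: "space M \<noteq> {}"
    and int: "integrable (M \<bind> \<kappa>) F"
  shows "AE x in M. integrable (\<kappa> x) F"
    and "integrable M (\<lambda>x. \<integral>y. F y \<partial>\<kappa> x)"
    and "(\<integral>y. F y \<partial>(M \<bind> \<kappa>)) = (\<integral>x. (\<integral>y. F y \<partial>\<kappa> x) \<partial>M)"
proof -
  have sb: "sets (M \<bind> \<kappa>) = sets B"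
    by (rule sets_bind[OF subprob_measurableD(2)[OF \<kappa>] ne])
  have sk: "x \<in> space M \<Longrightarrow> sets (\<kappa> x) = sets B" for x
    by (rule subprob_measurableD(2)[OF \<kappa>])
  have finabs: "(\<integral>\<^sup>+ y. ennreal \<bar>F y\<bar> \<partial>(M \<bind> \<kappa>)) < \<infinity>"
    using int by (simp add: integrable_iff_bounded)
  have finp: "(\<integral>\<^sup>+ y. ennreal (max 0 (F y)) \<partial>(M \<bind> \<kappa>)) < \<infinity>"
    by (rule le_less_trans[OF nn_integral_mono finabs]) auto
  have finn: "(\<integral>\<^sup>+ y. ennreal (max 0 (- F y)) \<partial>(M \<bind> \<kappa>)) < \<infinity>"
    by (rule le_less_trans[OF nn_integral_mono finabs]) auto
  have A1: "AE x in M. (\<integral>\<^sup>+ y. ennreal \<bar>F y\<bar> \<partial>\<kappa> x) < \<infinity>"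
    by (rule integral_bind_nonneg(1)[OF \<kappa> _ _ ne finabs]) auto
  have P2: "integrable M (\<lambda>x. \<integral>y. max 0 (F y) \<partial>\<kappa> x)"
    by (rule integral_bind_nonneg(2)[OF \<kappa> _ _ ne finp]) auto
  have N2: "integrable M (\<lambda>x. \<integral>y. max 0 (- F y) \<partial>\<kappa> x)"
    by (rule integral_bind_nonneg(2)[OF \<kappa> _ _ ne finn]) auto
  have P3: "(\<integral>y. max 0 (F y) \<partial>(M \<bind> \<kappa>)) = (\<integral>x. (\<integral>y. max 0 (F y) \<partial>\<kappa> x) \<partial>M)"
    by (rule integral_bind_nonneg(3)[OF \<kappa> _ _ ne finp]) auto
  have N3: "(\<integral>y. max 0 (- F y) \<partial>(M \<bind> \<kappa>)) = (\<integral>x. (\<integral>y. max 0 (- F y) \<partial>\<kappa> x) \<partial>M)"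
    by (rule integral_bind_nonneg(3)[OF \<kappa> _ _ ne finn]) auto
  show aeint: "AE x in M. integrable (\<kappa> x) F"
    using A1 AE_space by eventually_elim (auto simp: integrable_iff_bounded measurable_cong_sets[OF sk refl])
  have aeq: "AE x in M. (\<integral>y. F y \<partial>\<kappa> x) = (\<integral>y. max 0 (F y) \<partial>\<kappa> x) - (\<integral>y. max 0 (- F y) \<partial>\<kappa> x)"
    using aeint
  proof eventually_elim
    case (elim x)
    have "(\<integral>y. F y \<partial>\<kappa> x) = (\<integral>y. max 0 (F y) - max 0 (- F y) \<partial>\<kappa> x)"
      by (rule Bochner_Integration.integral_cong) auto
    also have "\<dots> = (\<integral>y. max 0 (F y) \<partial>\<kappa> x) - (\<integral>y. max 0 (- F y) \<partial>\<kappa> x)"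
      using elim by (intro Bochner_Integration.integral_diff) auto
    finally show ?case .
  qed
  have meas: "(\<lambda>x. \<integral>y. F y \<partial>\<kappa> x) \<in> borel_measurable M"
    by measurable
  have "integrable M (\<lambda>x. (\<integral>y. max 0 (F y) \<partial>\<kappa> x) - (\<integral>y. max 0 (- F y) \<partial>\<kappa> x))"
    using P2 N2 by auto
  then show "integrable M (\<lambda>x. \<integral>y. F y \<partial>\<kappa> x)"
    by (rule integrable_cong_AE_imp[OF _ meas]) (use aeq in \<open>auto elim: AE_mp\<close>)
  have "(\<integral>y. F y \<partial>(M \<bind> \<kappa>)) = (\<integral>y. max 0 (F y) - max 0 (- F y) \<partial>(M \<bind> \<kappa>))"
    by (rule Bochner_Integration.integral_cong) auto
  also have "\<dots> = (\<integral>y. max 0 (F y) \<partial>(M \<bind> \<kappa>)) - (\<integral>y. max 0 (- F y) \<partial>(M \<bind> \<kappa>))"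
    using int by (intro Bochner_Integration.integral_diff) auto
  also have "\<dots> = (\<integral>x. (\<integral>y. max 0 (F y) \<partial>\<kappa> x) \<partial>M) - (\<integral>x. (\<integral>y. max 0 (- F y) \<partial>\<kappa> x) \<partial>M)"
    using P3 N3 by simp
  also have "\<dots> = (\<integral>x. (\<integral>y. max 0 (F y) \<partial>\<kappa> x) - (\<integral>y. max 0 (- F y) \<partial>\<kappa> x) \<partial>M)"
    using P2 N2 by (intro Bochner_Integration.integral_diff[symmetric]) auto
  also have "\<dots> = (\<integral>x. (\<integral>y. F y \<partial>\<kappa> x) \<partial>M)"
    by (rule integral_cong_AE) (use aeq in \<open>auto elim: AE_mp\<close>)
  finally show "(\<integral>y. F y \<partial>(M \<bind> \<kappa>)) = (\<integral>x. (\<integral>y. F y \<partial>\<kappa> x) \<partial>M)" .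
qed


lemma mh_alpha_bounds:
  assumes "\<And>x. 0 < p x" "\<And>x. 0 < Q x"
  shows "0 \<le> mh_alpha p Q t z" "mh_alpha p Q t z \<le> 1"
  using assms[of t] assms[of z] unfolding mh_alpha_def by auto

lemma mh_alpha_meas[measurable]:
  assumes [measurable]: "p \<in> borel_measurable borel" "Q \<in> borel_measurable borel"
     and [measurable]: "f \<in> M \<rightarrow>\<^sub>M borel" "g \<in> M \<rightarrow>\<^sub>M borel"
  shows "(\<lambda>x. mh_alpha p Q (f x) (g x)) \<in> borel_measurable M"
  unfolding mh_alpha_def by measurable

lemma pair_diag_meas[measurable]:
  assumes [measurable]: "f \<in> M \<rightarrow>\<^sub>M (borel::'a::second_countable_topology measure)"
    "g \<in> M \<rightarrow>\<^sub>M (borel::'b::second_countable_topology measure)"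
  shows "(\<lambda>x. (f x, g x)) \<in> M \<rightarrow>\<^sub>M (borel :: ('a \<times> 'b) measure)"
  unfolding borel_prod[symmetric] by measurable

locale ckern =
  fixes mu :: "'a::{banach, second_countable_topology} measure" and Q p0 p1 :: "'a \<Rightarrow> real"
  assumes mu: "prob_space mu" "sets mu = sets borel"
  and Qm[measurable]: "Q \<in> borel_measurable borel"
  and p0m[measurable]: "p0 \<in> borel_measurable borel"
  and p1m[measurable]: "p1 \<in> borel_measurable borel"
  and Qpos: "\<And>x. 0 < Q x" and p0pos: "\<And>x. 0 < p0 x" and p1pos: "\<And>x. 0 < p1 x"
  and Qint: "integrable mu Q" "(\<integral>x. Q x \<partial>mu) = 1"
begin

abbreviation "K \<equiv> coupled_kernel mu Q p0 p1"

lemma mu_sf: "sigma_finite_measure mu"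
  using mu(1) by (simp add: prob_space_imp_sigma_finite)

lemma meas_mu: "(f::'a \<Rightarrow> real) \<in> borel_measurable mu \<longleftrightarrow> f \<in> borel_measurable borel"
  by (simp add: measurable_cong_sets[OF mu(2) refl])

definition "a0 t z = mh_alpha p0 Q t z"
definition "a1 t z = mh_alpha p1 Q t z"

lemma a_bounds: "0 \<le> a0 t z" "a0 t z \<le> 1" "0 \<le> a1 t z" "a1 t z \<le> 1"
  unfolding a0_def a1_def using mh_alpha_bounds[where p=p0 and Q=Q, OF p0pos Qpos] mh_alpha_bounds[where p=p1 and Q=Q, OF p1pos Qpos] by auto

lemma abs_cq: "0 \<le> c \<Longrightarrow> c \<le> 1 \<Longrightarrow> 0 < (q::real) \<Longrightarrow> \<bar>c * q\<bar> \<le> q"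
  by (simp add: abs_mult mult_left_le_one_le)

lemma int_bounded_Q:
  assumes m: "f \<in> borel_measurable borel" and b: "\<And>z. \<bar>f z\<bar> \<le> Q z"
  shows "integrable mu f"
proof (rule Bochner_Integration.integrable_bound[OF Qint(1)])
  show "f \<in> borel_measurable mu" using m by (simp add: meas_mu)
  show "AE x in mu. norm (f x) \<le> norm (Q x)" using b Qpos by (auto intro!: AE_I2 simp: abs_of_pos less_imp_le)
qed

definition "form t0 t1 A =
        (\<integral>z. min (mh_alpha p0 Q t0 z) (mh_alpha p1 Q t1 z) * indicator A (z, z) * Q z \<partial>mu)
      + (\<integral>z. max 0 (mh_alpha p0 Q t0 z - mh_alpha p1 Q t1 z) * indicator A (z, t1) * Q z \<partial>mu)
      + (\<integral>z. max 0 (mh_alpha p1 Q t1 z - mh_alpha p0 Q t0 z) * indicator A (t0, z) * Q z \<partial>mu)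
      + indicator A (t0, t1) *
          (1 - (\<integral>z. max (mh_alpha p0 Q t0 z) (mh_alpha p1 Q t1 z) * Q z \<partial>mu))"

lemma K_eq: "K (t0, t1) = measure_of UNIV (sets (borel :: ('a \<times> 'a) measure)) (\<lambda>A. ennreal (form t0 t1 A))"
  unfolding coupled_kernel_def form_def by simp

definition "s t0 t1 = 1 - (\<integral>z. max (mh_alpha p0 Q t0 z) (mh_alpha p1 Q t1 z) * Q z \<partial>mu)"

lemma s_nonneg: "0 \<le> s t0 t1"
proof -
  have "(\<integral>z. max (mh_alpha p0 Q t0 z) (mh_alpha p1 Q t1 z) * Q z \<partial>mu) \<le> (\<integral>z. Q z \<partial>mu)"
  proof (rule integral_mono)
    show "integrable mu (\<lambda>z. max (mh_alpha p0 Q t0 z) (mh_alpha p1 Q t1 z) * Q z)"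
      by (rule int_bounded_Q) (use a_bounds Qpos in \<open>auto simp: a0_def a1_def le_max_iff_disj intro!: abs_cq\<close>)
    show "integrable mu Q" by (rule Qint)
    show "max (mh_alpha p0 Q t0 z) (mh_alpha p1 Q t1 z) * Q z \<le> Q z" for z
      using a_bounds[of t0 z] a_bounds[of t1 z] Qpos[of z] by (auto simp: a0_def a1_def intro!: mult_left_le_one_le less_imp_le)
  qed
  then show ?thesis using Qint by (simp add: s_def)
qed


lemma nn_form_term:
  assumes cm: "c \<in> borel_measurable borel" and cnn: "\<And>z. 0 \<le> c z" and cb: "\<And>z. c z \<le> Q z"
    and \<phi>[measurable]: "\<phi> \<in> (borel :: 'a measure) \<rightarrow>\<^sub>M (borel :: ('a \<times> 'a) measure)"
    and A: "A \<in> sets (borel :: ('a \<times> 'a) measure)"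
  shows "integrable mu (\<lambda>z. c z * indicator A (\<phi> z))"
    and "ennreal (\<integral>z. c z * indicator A (\<phi> z) \<partial>mu) = (\<integral>\<^sup>+ z. ennreal (c z) * indicator A (\<phi> z) \<partial>mu)"
    and "0 \<le> (\<integral>z. c z * indicator A (\<phi> z) \<partial>mu)"
proof -
  note cm[measurable]
  have m: "(\<lambda>z. c z * indicator A (\<phi> z)) \<in> borel_measurable borel"
    using A by measurable
  show i: "integrable mu (\<lambda>z. c z * indicator A (\<phi> z))"
    by (rule int_bounded_Q[OF m]) (use cnn cb Qpos in \<open>auto simp: indicator_def less_imp_le\<close>)
  have "(\<integral>\<^sup>+ z. ennreal (c z) * indicator A (\<phi> z) \<partial>mu) = (\<integral>\<^sup>+ z. ennreal (c z * indicator A (\<phi> z)) \<partial>mu)"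
    by (rule nn_integral_cong) (auto simp: indicator_def)
  also have "\<dots> = ennreal (\<integral>z. c z * indicator A (\<phi> z) \<partial>mu)"
    by (rule nn_integral_eq_integral[OF i]) (use cnn in \<open>auto simp: indicator_def\<close>)
  finally show "ennreal (\<integral>z. c z * indicator A (\<phi> z) \<partial>mu) = (\<integral>\<^sup>+ z. ennreal (c z) * indicator A (\<phi> z) \<partial>mu)" ..
  show "0 \<le> (\<integral>z. c z * indicator A (\<phi> z) \<partial>mu)"
    using cnn by (auto simp: indicator_def)
qed

lemma nn_term_ca:
  assumes cm: "c \<in> borel_measurable borel"
    and \<phi>[measurable]: "\<phi> \<in> (borel :: 'a measure) \<rightarrow>\<^sub>M (borel :: ('a \<times> 'a) measure)"
    and A: "range A \<subseteq> sets (borel :: ('a \<times> 'a) measure)" and d: "disjoint_family A"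
  shows "(\<Sum>i. \<integral>\<^sup>+ z. ennreal (c z) * indicator (A i) (\<phi> z) \<partial>mu)
        = (\<integral>\<^sup>+ z. ennreal (c z) * indicator (\<Union>i. A i) (\<phi> z) \<partial>mu)"
proof -
  note cm[measurable]
  have "(\<Sum>i. \<integral>\<^sup>+ z. ennreal (c z) * indicator (A i) (\<phi> z) \<partial>mu)
        = (\<integral>\<^sup>+ z. (\<Sum>i. ennreal (c z) * indicator (A i) (\<phi> z)) \<partial>mu)"
  proof (rule nn_integral_suminf[symmetric])
    fix i
    have "A i \<in> sets borel" using A by auto
    then have "(\<lambda>z. ennreal (c z) * indicator (A i) (\<phi> z)) \<in> borel_measurable borel" by measurable
    then show "(\<lambda>z. ennreal (c z) * indicator (A i) (\<phi> z)) \<in> borel_measurable mu"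
      by (simp add: measurable_cong_sets[OF mu(2) refl])
  qed
  also have "\<dots> = (\<integral>\<^sup>+ z. ennreal (c z) * indicator (\<Union>i. A i) (\<phi> z) \<partial>mu)"
    by (simp add: suminf_indicator[OF d])
  finally show ?thesis .
qed

definition "c1 t0 t1 z = min (mh_alpha p0 Q t0 z) (mh_alpha p1 Q t1 z) * Q z"
definition "c2 t0 t1 z = max 0 (mh_alpha p0 Q t0 z - mh_alpha p1 Q t1 z) * Q z"
definition "c3 t0 t1 z = max 0 (mh_alpha p1 Q t1 z - mh_alpha p0 Q t0 z) * Q z"

lemma c_props:
  "c1 t0 t1 \<in> borel_measurable borel" "\<And>z. 0 \<le> c1 t0 t1 z" "\<And>z. c1 t0 t1 z \<le> Q z"
  "c2 t0 t1 \<in> borel_measurable borel" "\<And>z. 0 \<le> c2 t0 t1 z" "\<And>z. c2 t0 t1 z \<le> Q z"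
  "c3 t0 t1 \<in> borel_measurable borel" "\<And>z. 0 \<le> c3 t0 t1 z" "\<And>z. c3 t0 t1 z \<le> Q z"
  "\<And>z. c1 t0 t1 z + c2 t0 t1 z + c3 t0 t1 z = max (mh_alpha p0 Q t0 z) (mh_alpha p1 Q t1 z) * Q z"
proof -
  fix z
  have b: "0 \<le> mh_alpha p0 Q t0 z" "mh_alpha p0 Q t0 z \<le> 1" "0 \<le> mh_alpha p1 Q t1 z" "mh_alpha p1 Q t1 z \<le> 1"
    using a_bounds[of t0 z] a_bounds[of t1 z] by (auto simp: a0_def a1_def)
  have q: "0 < Q z" by (rule Qpos)
  show "0 \<le> c1 t0 t1 z" "0 \<le> c2 t0 t1 z" "0 \<le> c3 t0 t1 z"
    using b q by (auto simp: c1_def c2_def c3_def)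
  show "c1 t0 t1 z \<le> Q z" "c2 t0 t1 z \<le> Q z" "c3 t0 t1 z \<le> Q z"
    using b q by (auto simp: c1_def c2_def c3_def intro!: mult_left_le_one_le)
  show "c1 t0 t1 z + c2 t0 t1 z + c3 t0 t1 z = max (mh_alpha p0 Q t0 z) (mh_alpha p1 Q t1 z) * Q z"
    by (auto simp: c1_def c2_def c3_def max_def min_def algebra_simps)
next
  show "c1 t0 t1 \<in> borel_measurable borel" "c2 t0 t1 \<in> borel_measurable borel" "c3 t0 t1 \<in> borel_measurable borel"
    unfolding c1_def c2_def c3_def by measurable
qed


lemma suminf_add4: "(\<Sum>i. (a i + b i + c i + d i :: ennreal)) = suminf a + suminf b + suminf c + suminf d"
  by (simp add: suminf_add)

lemma phi_meas:
  "(\<lambda>z. (z, z)) \<in> (borel :: 'a measure) \<rightarrow>\<^sub>M (borel :: ('a \<times> 'a) measure)"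
  "(\<lambda>z. (z, t1)) \<in> (borel :: 'a measure) \<rightarrow>\<^sub>M (borel :: ('a \<times> 'a) measure)"
  "(\<lambda>z. (t0, z)) \<in> (borel :: 'a measure) \<rightarrow>\<^sub>M (borel :: ('a \<times> 'a) measure)"
  by measurable

lemma form_split:
  assumes A: "A \<in> sets (borel :: ('a \<times> 'a) measure)"
  shows "ennreal (form t0 t1 A) =
     (\<integral>\<^sup>+ z. ennreal (c1 t0 t1 z) * indicator A (z, z) \<partial>mu)
   + (\<integral>\<^sup>+ z. ennreal (c2 t0 t1 z) * indicator A (z, t1) \<partial>mu)
   + (\<integral>\<^sup>+ z. ennreal (c3 t0 t1 z) * indicator A (t0, z) \<partial>mu)
   + ennreal (s t0 t1) * indicator A (t0, t1)"
proof -
  note T1 = nn_form_term[OF c_props(1-3) phi_meas(1) A]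
  note T2 = nn_form_term[OF c_props(4-6) phi_meas(2) A]
  note T3 = nn_form_term[OF c_props(7-9) phi_meas(3) A]
  have e1: "(\<integral>z. min (mh_alpha p0 Q t0 z) (mh_alpha p1 Q t1 z) * indicator A (z, z) * Q z \<partial>mu)
      = (\<integral>z. c1 t0 t1 z * indicator A (z, z) \<partial>mu)"
    by (rule Bochner_Integration.integral_cong) (simp_all add: c1_def mult_ac)
  have e2: "(\<integral>z. max 0 (mh_alpha p0 Q t0 z - mh_alpha p1 Q t1 z) * indicator A (z, t1) * Q z \<partial>mu)
      = (\<integral>z. c2 t0 t1 z * indicator A (z, t1) \<partial>mu)"
    by (rule Bochner_Integration.integral_cong) (simp_all add: c2_def mult_ac)
  have e3: "(\<integral>z. max 0 (mh_alpha p1 Q t1 z - mh_alpha p0 Q t0 z) * indicator A (t0, z) * Q z \<partial>mu)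
      = (\<integral>z. c3 t0 t1 z * indicator A (t0, z) \<partial>mu)"
    by (rule Bochner_Integration.integral_cong) (simp_all add: c3_def mult_ac)
  have eqA: "form t0 t1 A = (\<integral>z. c1 t0 t1 z * indicator A (z, z) \<partial>mu) + (\<integral>z. c2 t0 t1 z * indicator A (z, t1) \<partial>mu)
     + (\<integral>z. c3 t0 t1 z * indicator A (t0, z) \<partial>mu) + indicator A (t0, t1) * s t0 t1"
    unfolding form_def s_def e1 e2 e3 by (rule refl)
  have ind: "ennreal (indicator A (t0, t1) * s t0 t1) = ennreal (s t0 t1) * indicator A (t0, t1)"
    by (simp add: indicator_def)
  have "ennreal (form t0 t1 A) = ennreal (\<integral>z. c1 t0 t1 z * indicator A (z, z) \<partial>mu) + ennreal (\<integral>z. c2 t0 t1 z * indicator A (z, t1) \<partial>mu)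
     + ennreal (\<integral>z. c3 t0 t1 z * indicator A (t0, z) \<partial>mu) + ennreal (indicator A (t0, t1) * s t0 t1)"
    unfolding eqA using T1(3) T2(3) T3(3) s_nonneg[of t0 t1]
    by (simp add: ennreal_plus del: ennreal_plus_if)
  then show ?thesis by (simp only: T1(2) T2(2) T3(2) ind)
qed

lemma form_ca: "countably_additive (sets (borel :: ('a \<times> 'a) measure)) (\<lambda>A. ennreal (form t0 t1 A))"
  unfolding countably_additive_def
proof (intro allI impI)
  fix A :: "nat \<Rightarrow> ('a \<times> 'a) set"
  assume A: "range A \<subseteq> sets borel" and d: "disjoint_family A" and U: "\<Union> (range A) \<in> sets borel"
  have Ai: "A i \<in> sets borel" for i using A by auto
  have "(\<Sum>i. ennreal (form t0 t1 (A i))) =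
     (\<Sum>i. (\<integral>\<^sup>+ z. ennreal (c1 t0 t1 z) * indicator (A i) (z, z) \<partial>mu)
   + (\<integral>\<^sup>+ z. ennreal (c2 t0 t1 z) * indicator (A i) (z, t1) \<partial>mu)
   + (\<integral>\<^sup>+ z. ennreal (c3 t0 t1 z) * indicator (A i) (t0, z) \<partial>mu)
   + ennreal (s t0 t1) * indicator (A i) (t0, t1))"
    by (simp add: form_split[OF Ai])
  also have "\<dots> = (\<Sum>i. (\<integral>\<^sup>+ z. ennreal (c1 t0 t1 z) * indicator (A i) (z, z) \<partial>mu))
   + (\<Sum>i. (\<integral>\<^sup>+ z. ennreal (c2 t0 t1 z) * indicator (A i) (z, t1) \<partial>mu))
   + (\<Sum>i. (\<integral>\<^sup>+ z. ennreal (c3 t0 t1 z) * indicator (A i) (t0, z) \<partial>mu))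
   + (\<Sum>i. ennreal (s t0 t1) * indicator (A i) (t0, t1))"
    by (rule suminf_add4)
  also have "\<dots> = (\<integral>\<^sup>+ z. ennreal (c1 t0 t1 z) * indicator (\<Union>i. A i) (z, z) \<partial>mu)
   + (\<integral>\<^sup>+ z. ennreal (c2 t0 t1 z) * indicator (\<Union>i. A i) (z, t1) \<partial>mu)
   + (\<integral>\<^sup>+ z. ennreal (c3 t0 t1 z) * indicator (\<Union>i. A i) (t0, z) \<partial>mu)
   + ennreal (s t0 t1) * indicator (\<Union>i. A i) (t0, t1)"
    by (simp add: nn_term_ca[OF c_props(1) phi_meas(1) A d] nn_term_ca[OF c_props(4) phi_meas(2) A d]
        nn_term_ca[OF c_props(7) phi_meas(3) A d] suminf_indicator[OF d])
  also have "\<dots> = ennreal (form t0 t1 (\<Union> (range A)))"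
    by (simp add: form_split[OF U])
  finally show "(\<Sum>i. ennreal (form t0 t1 (A i))) = ennreal (form t0 t1 (\<Union> (range A)))" .
qed

lemma K_emeasure:
  assumes A: "A \<in> sets (borel :: ('a \<times> 'a) measure)"
  shows "emeasure (K (t0, t1)) A = ennreal (form t0 t1 A)"
  unfolding K_eq
proof (rule emeasure_measure_of_sigma[OF _ _ form_ca A])
  show "sigma_algebra UNIV (sets (borel :: ('a \<times> 'a) measure))"
    using sets.sigma_algebra_axioms[of "borel :: ('a \<times> 'a) measure"] by simp
  show "positive (sets borel) (\<lambda>A. ennreal (form t0 t1 A))"
    by (simp add: positive_def form_def)
qed

lemma K_sets: "sets (K t) = sets (borel :: ('a \<times> 'a) measure)"
proof -
  obtain t0 t1 where t: "t = (t0, t1)" by (cases t)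
  have "sets (K (t0, t1)) = sigma_sets UNIV (sets (borel :: ('a \<times> 'a) measure))"
    unfolding K_eq by (rule sets_measure_of) simp
  also have "\<dots> = sets borel"
    using sets.sigma_sets_eq[of "borel :: ('a \<times> 'a) measure"] by simp
  finally show ?thesis by (simp add: t)
qed

lemma K_space: "space (K t) = UNIV"
  using sets_eq_imp_space_eq[OF K_sets[of t]] by simp

lemma K_prob: "prob_space (K t)"
proof -
  obtain t0 t1 where t: "t = (t0, t1)" by (cases t)
  have i1: "integrable mu (c1 t0 t1)" "integrable mu (c2 t0 t1)" "integrable mu (c3 t0 t1)"
    using c_props[of t0 t1] Qpos by (auto intro!: int_bounded_Q simp: abs_of_nonneg)
  have [simp]: "min (mh_alpha p0 Q t0 z) (mh_alpha p1 Q t1 z) * Q z = c1 t0 t1 z"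
    "max 0 (mh_alpha p0 Q t0 z - mh_alpha p1 Q t1 z) * Q z = c2 t0 t1 z"
    "max 0 (mh_alpha p1 Q t1 z - mh_alpha p0 Q t0 z) * Q z = c3 t0 t1 z" for z
    by (simp_all add: c1_def c2_def c3_def)
  have "form t0 t1 UNIV = (\<integral>z. c1 t0 t1 z \<partial>mu) + (\<integral>z. c2 t0 t1 z \<partial>mu) + (\<integral>z. c3 t0 t1 z \<partial>mu)
      + (1 - (\<integral>z. max (mh_alpha p0 Q t0 z) (mh_alpha p1 Q t1 z) * Q z \<partial>mu))"
    unfolding form_def by simp
  also have "(\<integral>z. c1 t0 t1 z \<partial>mu) + (\<integral>z. c2 t0 t1 z \<partial>mu) + (\<integral>z. c3 t0 t1 z \<partial>mu)
     = (\<integral>z. c1 t0 t1 z + c2 t0 t1 z + c3 t0 t1 z \<partial>mu)"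
    using i1 by simp
  also have "\<dots> = (\<integral>z. max (mh_alpha p0 Q t0 z) (mh_alpha p1 Q t1 z) * Q z \<partial>mu)"
    by (simp add: c_props(10))
  finally have "form t0 t1 UNIV = 1" by simp
  then have "emeasure (K t) (space (K t)) = 1"
    by (simp add: K_space t K_emeasure)
  then show ?thesis by (rule prob_spaceI)
qed


lemma pm_cong: "(f \<in> borel_measurable (((borel :: 'a measure) \<Otimes>\<^sub>M (borel :: 'a measure)) \<Otimes>\<^sub>M mu)) = (f \<in> borel_measurable (((borel :: 'a measure) \<Otimes>\<^sub>M (borel :: 'a measure)) \<Otimes>\<^sub>M (borel :: 'a measure)))"
  by (simp add: measurable_cong_sets[OF sets_pair_measure_cong[OF refl mu(2)] refl])

lemma form_meas:
  assumes A[measurable]: "A \<in> sets (borel :: ('a \<times> 'a) measure)"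
  shows "(\<lambda>\<theta>. form (fst \<theta>) (snd \<theta>) A) \<in> borel_measurable borel"
proof -
  note li = sigma_finite_measure.borel_measurable_lebesgue_integral[OF mu_sf]
  have m1: "(\<lambda>\<theta>. \<integral>z. min (mh_alpha p0 Q (fst \<theta>) z) (mh_alpha p1 Q (snd \<theta>) z) * indicator A (z, z) * Q z \<partial>mu) \<in> borel_measurable (borel \<Otimes>\<^sub>M borel)"
    by (rule li) (unfold pm_cong, measurable)
  have m2: "(\<lambda>\<theta>. \<integral>z. max 0 (mh_alpha p0 Q (fst \<theta>) z - mh_alpha p1 Q (snd \<theta>) z) * indicator A (z, snd \<theta>) * Q z \<partial>mu) \<in> borel_measurable (borel \<Otimes>\<^sub>M borel)"
    by (rule li) (unfold pm_cong, measurable)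
  have m3: "(\<lambda>\<theta>. \<integral>z. max 0 (mh_alpha p1 Q (snd \<theta>) z - mh_alpha p0 Q (fst \<theta>) z) * indicator A (fst \<theta>, z) * Q z \<partial>mu) \<in> borel_measurable (borel \<Otimes>\<^sub>M borel)"
    by (rule li) (unfold pm_cong, measurable)
  have m4: "(\<lambda>\<theta>. \<integral>z. max (mh_alpha p0 Q (fst \<theta>) z) (mh_alpha p1 Q (snd \<theta>) z) * Q z \<partial>mu) \<in> borel_measurable (borel \<Otimes>\<^sub>M borel)"
    by (rule li) (unfold pm_cong, measurable)
  have m5: "(\<lambda>\<theta>. indicator A (fst \<theta>, snd \<theta>) :: real) \<in> borel_measurable (borel \<Otimes>\<^sub>M borel)"
    using A unfolding borel_prod by simp
  show ?thesis
    unfolding form_def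
    by (intro borel_measurable_add borel_measurable_times borel_measurable_diff borel_measurable_const m1[unfolded borel_prod] m2[unfolded borel_prod] m3[unfolded borel_prod] m4[unfolded borel_prod] m5[unfolded borel_prod])
qed

lemma K_meas: "K \<in> (borel :: ('a \<times> 'a) measure) \<rightarrow>\<^sub>M prob_algebra (borel :: ('a \<times> 'a) measure)"
proof (rule measurable_prob_algebra_generated[where \<Omega>=UNIV and G="sets borel"])
  show "sets (borel :: ('a \<times> 'a) measure) = sigma_sets UNIV (sets borel)"
    using sets.sigma_sets_eq[of "borel :: ('a \<times> 'a) measure"] by simp
  show "Int_stable (sets (borel :: ('a \<times> 'a) measure))"
    by (auto simp: Int_stable_def)
  show "sets (borel :: ('a \<times> 'a) measure) \<subseteq> Pow UNIV" by simp
  show "prob_space (K a)" for a by (rule K_prob)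
  show "sets (K a) = sets borel" for a by (rule K_sets)
  fix A :: "('a \<times> 'a) set" assume A: "A \<in> sets borel"
  have "(\<lambda>a. emeasure (K a) A) = (\<lambda>a. ennreal (form (fst a) (snd a) A))"
  proof
    fix a :: "'a \<times> 'a"
    obtain t0 t1 where "a = (t0, t1)" by (cases a)
    then show "emeasure (K a) A = ennreal (form (fst a) (snd a) A)" by (simp add: K_emeasure[OF A])
  qed
  then show "(\<lambda>a. emeasure (K a) A) \<in> borel_measurable borel"
    using form_meas[OF A] by simp
qed

end


lemma sq_int_le:
  fixes f :: "_ \<Rightarrow> real"
  assumes "prob_space M" "integrable M f" "integrable M (\<lambda>x. (f x)\<^sup>2)"
  shows "(\<integral>x. f x \<partial>M)\<^sup>2 \<le> (\<integral>x. (f x)\<^sup>2 \<partial>M)"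
proof -
  interpret prob_space M by fact
  have "0 \<le> variance f" by (rule variance_positive)
  also have "variance f = expectation (\<lambda>x. (f x)\<^sup>2) - (expectation f)\<^sup>2"
    by (rule variance_eq) (use assms in auto)
  finally show ?thesis by simp
qed

lemma sq_integrable_imp_integrable:
  fixes f :: "_ \<Rightarrow> real"
  assumes "finite_measure M" "f \<in> borel_measurable M" "integrable M (\<lambda>x. (f x)\<^sup>2)"
  shows "integrable M f"
proof (rule Bochner_Integration.integrable_bound[where f="\<lambda>x. 1 + (f x)\<^sup>2"])
  interpret finite_measure M by fact
  show "integrable M (\<lambda>x. 1 + (f x)\<^sup>2)" using assms(3) by simp
  show "f \<in> borel_measurable M" by fact
  show "AE x in M. norm (f x) \<le> norm (1 + (f x)\<^sup>2)"
  proof (rule AE_I2)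
    fix x
    have "\<bar>f x\<bar> \<le> 1 + (f x)\<^sup>2"
    proof (cases "\<bar>f x\<bar> \<le> 1")
      case True then show ?thesis by (simp add: add_increasing2)
    next
      case False
      then have "\<bar>f x\<bar> * 1 \<le> \<bar>f x\<bar> * \<bar>f x\<bar>" by (intro mult_left_mono) auto
      then show ?thesis by (simp add: power2_eq_square abs_mult_self_eq)
    qed
    then show "norm (f x) \<le> norm (1 + (f x)\<^sup>2)" by simp
  qed
qed

locale stat = ckern +
  fixes \<nu> :: "('a \<times> 'a) measure"
  assumes inv: "invariant_prob borel (coupled_kernel mu Q p0 p1) \<nu>"
begin

lemma nu_prob: "prob_space \<nu>" and nu_sets: "sets \<nu> = sets (borel :: ('a \<times> 'a) measure)"
  using inv by (auto simp: invariant_prob_def)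

lemma nu_ne: "space \<nu> \<noteq> {}"
  using prob_space.not_empty[OF nu_prob] .

lemma meas_nu: "(f \<in> borel_measurable \<nu>) = (f \<in> borel_measurable (borel :: ('a \<times> 'a) measure))"
  by (simp add: measurable_cong_sets[OF nu_sets refl])

lemma K_sub: "K \<in> \<nu> \<rightarrow>\<^sub>M subprob_algebra borel"
  using measurable_prob_algebraD[OF K_meas] by (simp add: measurable_cong_sets[OF nu_sets refl])

lemma K_sub': "K \<in> borel \<rightarrow>\<^sub>M subprob_algebra borel"
  using measurable_prob_algebraD[OF K_meas] .

lemma nu_bind: "\<nu> \<bind> K = \<nu>"
proof (rule measure_eqI)
  have sb: "sets (\<nu> \<bind> K) = sets borel"
    by (rule sets_bind[OF K_sets nu_ne])
  then show "sets (\<nu> \<bind> K) = sets \<nu>" by (simp add: nu_sets)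
  fix A assume "A \<in> sets (\<nu> \<bind> K)"
  then have A: "A \<in> sets borel" using sb by simp
  have "emeasure (\<nu> \<bind> K) A = (\<integral>\<^sup>+x. emeasure (K x) A \<partial>\<nu>)"
    by (rule emeasure_bind[OF nu_ne K_sub A])
  also have "\<dots> = emeasure \<nu> A"
    using inv A by (simp add: invariant_prob_def)
  finally show "emeasure (\<nu> \<bind> K) A = emeasure \<nu> A" .
qed

definition "l2 (f :: 'a \<times> 'a \<Rightarrow> real) \<longleftrightarrow> f \<in> borel_measurable (borel :: ('a \<times> 'a) measure) \<and> integrable \<nu> (\<lambda>x. (f x)\<^sup>2)"

abbreviation "P \<equiv> markov_op K"

lemma P_meas: "f \<in> borel_measurable borel \<Longrightarrow> P f \<in> borel_measurable borel"
  unfolding markov_op_def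
  by (rule measurable_compose[OF K_sub' integral_measurable_subprob_algebra])

lemma l2_int: "l2 f \<Longrightarrow> integrable \<nu> f"
  by (rule sq_integrable_imp_integrable) (auto simp: l2_def meas_nu prob_space.finite_measure[OF nu_prob])

lemma P_props:
  assumes f: "l2 f"
  shows "AE x in \<nu>. integrable (K x) f \<and> integrable (K x) (\<lambda>y. (f y)\<^sup>2)"
    and "(\<integral>x. P f x \<partial>\<nu>) = (\<integral>x. f x \<partial>\<nu>)"
    and "l2 (P f)"
    and "(\<integral>x. (P f x)\<^sup>2 \<partial>\<nu>) \<le> (\<integral>x. (f x)\<^sup>2 \<partial>\<nu>)"
proof -
  have fm[measurable]: "f \<in> borel_measurable borel" using f by (simp add: l2_def)
  have fi: "integrable (\<nu> \<bind> K) f" using l2_int[OF f] by (simp add: nu_bind)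
  have f2i: "integrable (\<nu> \<bind> K) (\<lambda>y. (f y)\<^sup>2)" using f by (simp add: nu_bind l2_def)
  note G1 = integral_bind_gen[OF K_sub fm nu_ne fi]
  have f2m: "(\<lambda>y. (f y)\<^sup>2) \<in> borel_measurable borel" by measurable
  note G2 = integral_bind_gen[OF K_sub f2m nu_ne f2i]
  show ae: "AE x in \<nu>. integrable (K x) f \<and> integrable (K x) (\<lambda>y. (f y)\<^sup>2)"
    using G1(1) G2(1) by eventually_elim auto
  show "(\<integral>x. P f x \<partial>\<nu>) = (\<integral>x. f x \<partial>\<nu>)"
    using G1(3) by (simp add: nu_bind markov_op_def)
  have Pm: "P f \<in> borel_measurable borel" by (rule P_meas[OF fm])
  have jen: "AE x in \<nu>. (P f x)\<^sup>2 \<le> (\<integral>y. (f y)\<^sup>2 \<partial>K x)"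
    using ae by eventually_elim (auto simp: markov_op_def intro!: sq_int_le K_prob)
  have P2i: "integrable \<nu> (\<lambda>x. (P f x)\<^sup>2)"
  proof (rule Bochner_Integration.integrable_bound[OF G2(2)])
    show "(\<lambda>x. (P f x)\<^sup>2) \<in> borel_measurable \<nu>" using Pm by (simp add: meas_nu)
    show "AE x in \<nu>. norm ((P f x)\<^sup>2) \<le> norm (\<integral>y. (f y)\<^sup>2 \<partial>K x)"
      using jen by eventually_elim auto
  qed
  then show "l2 (P f)" using Pm by (simp add: l2_def)
  have "(\<integral>x. (P f x)\<^sup>2 \<partial>\<nu>) \<le> (\<integral>x. (\<integral>y. (f y)\<^sup>2 \<partial>K x) \<partial>\<nu>)"
    by (rule integral_mono_AE[OF P2i G2(2) jen])
  also have "\<dots> = (\<integral>x. (f x)\<^sup>2 \<partial>\<nu>)" using G2(3) by (simp add: nu_bind)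
  finally show "(\<integral>x. (P f x)\<^sup>2 \<partial>\<nu>) \<le> (\<integral>x. (f x)\<^sup>2 \<partial>\<nu>)" .
qed

end


context stat begin

lemma l2_0_iff: "f \<in> L2_0 \<nu> \<longleftrightarrow> l2 f \<and> (\<integral>x. f x \<partial>\<nu>) = 0"
  by (simp add: L2_0_def l2_def meas_nu)

lemma Pk_props:
  assumes f: "l2 f"
  shows "l2 ((P ^^ k) f)" "(\<integral>x. ((P ^^ k) f x)\<^sup>2 \<partial>\<nu>) \<le> (\<integral>x. (f x)\<^sup>2 \<partial>\<nu>)"
    "(\<integral>x. (P ^^ k) f x \<partial>\<nu>) = (\<integral>x. f x \<partial>\<nu>)"
proof -
  have "l2 ((P ^^ k) f) \<and> (\<integral>x. ((P ^^ k) f x)\<^sup>2 \<partial>\<nu>) \<le> (\<integral>x. (f x)\<^sup>2 \<partial>\<nu>)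
     \<and> (\<integral>x. (P ^^ k) f x \<partial>\<nu>) = (\<integral>x. f x \<partial>\<nu>)"
  proof (induction k)
    case 0 then show ?case using f by simp
  next
    case (Suc k)
    then have l: "l2 ((P ^^ k) f)" by simp
    show ?case using Suc P_props[OF l] by auto
  qed
  then show "l2 ((P ^^ k) f)" "(\<integral>x. ((P ^^ k) f x)\<^sup>2 \<partial>\<nu>) \<le> (\<integral>x. (f x)\<^sup>2 \<partial>\<nu>)"
    "(\<integral>x. (P ^^ k) f x \<partial>\<nu>) = (\<integral>x. f x \<partial>\<nu>)" by auto
qed

lemma Pk_L2_0: "u \<in> L2_0 \<nu> \<Longrightarrow> (P ^^ k) u \<in> L2_0 \<nu>"
  using Pk_props by (auto simp: l2_0_iff)

lemma P_hom: "(P ^^ k) (\<lambda>y. c * f y) = (\<lambda>x. c * (P ^^ k) f x)"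
proof (induction k)
  case 0 then show ?case by simp
next
  case (Suc k)
  have "(P ^^ Suc k) (\<lambda>y. c * f y) = P ((P ^^ k) (\<lambda>y. c * f y))" by simp
  also have "\<dots> = P (\<lambda>x. c * (P ^^ k) f x)" by (simp only: Suc)
  also have "\<dots> = (\<lambda>x. c * P ((P ^^ k) f) x)" by (simp add: fun_eq_iff markov_op_def)
  finally show ?case by simp
qed

lemma adj_bound:
  assumes "fg \<in> {(f, g). f \<in> L2_0 \<nu> \<and> g \<in> L2_0 \<nu> \<and> L2_norm \<nu> f \<le> 1 \<and> L2_norm \<nu> g \<le> 1}"
  shows "\<bar>L2_inner \<nu> ((P ^^ k) (fst fg)) ((P ^^ k) (snd fg))\<bar> \<le> 1"
proof -
  obtain f g where fg: "fg = (f, g)" by (cases fg)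
  have f: "l2 f" "L2_norm \<nu> f \<le> 1" and g: "l2 g" "L2_norm \<nu> g \<le> 1"
    using assms by (auto simp: fg l2_0_iff)
  note pf = Pk_props[OF f(1), of k] and pg = Pk_props[OF g(1), of k]
  have "\<bar>L2_inner \<nu> ((P ^^ k) f) ((P ^^ k) g)\<bar>
     \<le> sqrt (\<integral>x. ((P ^^ k) f x)\<^sup>2 \<partial>\<nu>) * sqrt (\<integral>x. ((P ^^ k) g x)\<^sup>2 \<partial>\<nu>)"
    unfolding L2_inner_def
    by (rule cs_real(2)) (use pf(1) pg(1) in \<open>auto simp: l2_def meas_nu\<close>)
  also have "\<dots> \<le> sqrt (\<integral>x. (f x)\<^sup>2 \<partial>\<nu>) * sqrt (\<integral>x. (g x)\<^sup>2 \<partial>\<nu>)"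
    by (intro mult_mono real_sqrt_le_mono pf(2) pg(2)) auto
  also have "\<dots> \<le> 1 * 1"
    using f(2) g(2) unfolding L2_norm_def by (intro mult_mono) auto
  finally show ?thesis by (simp add: fg)
qed

lemma adj_bdd: "bdd_above ((\<lambda>fg. \<bar>L2_inner \<nu> ((P ^^ k) (fst fg)) ((P ^^ k) (snd fg))\<bar>) `
   {(f, g). f \<in> L2_0 \<nu> \<and> g \<in> L2_0 \<nu> \<and> L2_norm \<nu> f \<le> 1 \<and> L2_norm \<nu> g \<le> 1})"
  using adj_bound by (intro bdd_aboveI[where M=1]) blast

lemma zero_L2_0: "(\<lambda>x. 0) \<in> L2_0 \<nu>"
  by (simp add: L2_0_def)

lemma adj_nonneg_le1: "0 \<le> adjpow_norm \<nu> K k" "adjpow_norm \<nu> K k \<le> 1"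
proof -
  let ?S = "{(f, g). f \<in> L2_0 \<nu> \<and> g \<in> L2_0 \<nu> \<and> L2_norm \<nu> f \<le> 1 \<and> L2_norm \<nu> g \<le> 1}"
  define z0 :: "'a \<times> 'a \<Rightarrow> real" where "z0 = (\<lambda>x. 0)"
  have z: "(z0, z0) \<in> ?S" using zero_L2_0 by (simp add: L2_norm_def z0_def)
  then have ne: "?S \<noteq> {}" by blast
  show "adjpow_norm \<nu> K k \<le> 1"
    unfolding adjpow_norm_def by (rule cSUP_least[OF ne adj_bound])
  have "\<bar>L2_inner \<nu> ((P ^^ k) (fst (z0, z0))) ((P ^^ k) (snd (z0, z0)))\<bar> \<le> adjpow_norm \<nu> K k"
    unfolding adjpow_norm_def by (rule cSUP_upper[OF z adj_bdd])
  then show "0 \<le> adjpow_norm \<nu> K k" by (rule order_trans[rotated]) simp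
qed

lemma decay1:
  assumes u: "u \<in> L2_0 \<nu>"
  shows "(\<integral>x. ((P ^^ k) u x)\<^sup>2 \<partial>\<nu>) \<le> adjpow_norm \<nu> K k * (\<integral>x. (u x)\<^sup>2 \<partial>\<nu>)"
proof -
  have ul: "l2 u" "(\<integral>x. u x \<partial>\<nu>) = 0" using u by (auto simp: l2_0_iff)
  note pu = Pk_props[OF ul(1), of k]
  show ?thesis
  proof (cases "(\<integral>x. (u x)\<^sup>2 \<partial>\<nu>) = 0")
    case True
    then show ?thesis using pu(2) by simp
  next
    case False
    define n where "n = sqrt (\<integral>x. (u x)\<^sup>2 \<partial>\<nu>)"
    have "0 \<le> (\<integral>x. (u x)\<^sup>2 \<partial>\<nu>)" by simp
    then have pos: "0 < (\<integral>x. (u x)\<^sup>2 \<partial>\<nu>)" using False by (simp add: less_le)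
    then have npos: "0 < n" unfolding n_def by simp
    have nsq: "n\<^sup>2 = (\<integral>x. (u x)\<^sup>2 \<partial>\<nu>)" unfolding n_def by simp
    define v where "v = (\<lambda>x. (1 / n) * u x)"
    have vsq: "(\<lambda>x. (v x)\<^sup>2) = (\<lambda>x. (1 / n)\<^sup>2 * (u x)\<^sup>2)" by (simp add: v_def power_mult_distrib power_divide fun_eq_iff)
    have vm: "v \<in> borel_measurable borel" unfolding v_def
      by (rule borel_measurable_times[OF borel_measurable_const]) (use ul(1) in \<open>simp add: l2_def\<close>)
    have vi: "integrable \<nu> (\<lambda>x. (v x)\<^sup>2)" unfolding vsq
      by (rule integrable_mult_right) (use ul(1) in \<open>simp add: l2_def\<close>)
    have vl: "l2 v" unfolding l2_def using vm vi by blast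
    have vint: "(\<integral>x. v x \<partial>\<nu>) = 0" using ul(2) by (simp add: v_def)
    have vn: "L2_norm \<nu> v = 1"
      unfolding L2_norm_def vsq using npos nsq pos by (simp add: power_divide)
    have mem: "(v, v) \<in> {(f, g). f \<in> L2_0 \<nu> \<and> g \<in> L2_0 \<nu> \<and> L2_norm \<nu> f \<le> 1 \<and> L2_norm \<nu> g \<le> 1}"
      using vl vint vn by (simp add: l2_0_iff)
    have "\<bar>L2_inner \<nu> ((P ^^ k) (fst (v, v))) ((P ^^ k) (snd (v, v)))\<bar> \<le> adjpow_norm \<nu> K k"
      unfolding adjpow_norm_def by (rule cSUP_upper[OF mem adj_bdd])
    moreover have "L2_inner \<nu> ((P ^^ k) (fst (v, v))) ((P ^^ k) (snd (v, v)))
       = (1 / n)\<^sup>2 * (\<integral>x. ((P ^^ k) u x)\<^sup>2 \<partial>\<nu>)"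
    proof -
      have "L2_inner \<nu> ((P ^^ k) (fst (v, v))) ((P ^^ k) (snd (v, v)))
        = (\<integral>x. (1 / n)\<^sup>2 * ((P ^^ k) u x)\<^sup>2 \<partial>\<nu>)"
        unfolding L2_inner_def fst_conv snd_conv v_def P_hom
        by (rule Bochner_Integration.integral_cong) (simp_all add: power2_eq_square)
      then show ?thesis by simp
    qed
    ultimately have "(1 / n)\<^sup>2 * (\<integral>x. ((P ^^ k) u x)\<^sup>2 \<partial>\<nu>) \<le> adjpow_norm \<nu> K k" by simp
    then have "(\<integral>x. ((P ^^ k) u x)\<^sup>2 \<partial>\<nu>) \<le> adjpow_norm \<nu> K k * n\<^sup>2"
      using npos by (simp add: field_simps power_divide)
    then show ?thesis by (simp add: nsq)
  qed
qed

end


lemma sum_div_le: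
  fixes a :: "nat \<Rightarrow> real"
  assumes nn: "\<And>q. 0 \<le> a q" and k: "1 \<le> k"
  shows "(\<Sum>m<M. a (m div k)) \<le> real k * (\<Sum>q<M. a q)"
proof -
  have eq: "(\<Sum>m<M * k. a (m div k)) = real k * (\<Sum>q<M. a q)" for M
  proof (induction M)
    case 0 then show ?case by simp
  next
    case (Suc M)
    have split: "{..<Suc M * k} = {..<M * k} \<union> {M * k..<M * k + k}" by auto
    have "(\<Sum>m\<in>{M * k..<M * k + k}. a (m div k)) = (\<Sum>m\<in>{M * k..<M * k + k}. a M)"
    proof (rule sum.cong[OF refl])
      fix m assume "m \<in> {M * k..<M * k + k}"
      then have "m div k = M" using k
        by (metis atLeastLessThan_iff div_nat_eqI mult.commute add.commute mult_Suc_right)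
      then show "a (m div k) = a M" by simp
    qed
    also have "\<dots> = real k * a M" by simp
    finally have "(\<Sum>m<Suc M * k. a (m div k)) = (\<Sum>m<M * k. a (m div k)) + real k * a M"
      unfolding split by (subst sum.union_disjoint) auto
    then show ?case using Suc by (simp add: distrib_left)
  qed
  have "(\<Sum>m<M. a (m div k)) \<le> (\<Sum>m<M * k. a (m div k))"
    using k nn by (intro sum_mono2) auto
  then show ?thesis using eq[of M] by simp
qed

lemma geom_div_bound:
  fixes \<rho> :: real
  assumes "0 \<le> \<rho>" "\<rho> < 1" "1 \<le> k"
  shows "(\<Sum>m<M. \<rho> ^ (m div k)) \<le> real k / (1 - \<rho>)"
proof -
  have "(\<Sum>m<M. \<rho> ^ (m div k)) \<le> real k * (\<Sum>q<M. \<rho> ^ q)"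
    by (rule sum_div_le) (use assms in auto)
  also have "(\<Sum>q<M. \<rho> ^ q) = (1 - \<rho> ^ M) / (1 - \<rho>)"
    using assms by (subst geometric_sum) (auto simp: field_simps)
  also have "\<dots> \<le> 1 / (1 - \<rho>)"
    using assms by (intro divide_right_mono) auto
  finally show ?thesis using assms by (simp add: mult_left_mono)
qed

lemma sqrt_gap: "0 < (\<gamma>::real) \<Longrightarrow> \<gamma> \<le> 1 \<Longrightarrow> 1 / (1 - sqrt (1 - \<gamma>)) \<le> 2 / \<gamma>"
proof -
  assume g: "0 < \<gamma>" "\<gamma> \<le> 1"
  have "sqrt (1 - \<gamma>) \<le> sqrt ((1 - \<gamma> / 2)\<^sup>2)"
    by (rule real_sqrt_le_mono) (simp add: power2_eq_square algebra_simps)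
  also have "\<dots> = 1 - \<gamma> / 2" using g by simp
  finally have "\<gamma> / 2 \<le> 1 - sqrt (1 - \<gamma>)" by simp
  then show ?thesis using g by (simp add: field_simps)
qed

context stat begin

definition "gam k = gamma2_adjpow \<nu> K k"

lemma gam_bounds: "0 \<le> gam k" "gam k \<le> 1"
  using adj_nonneg_le1[of k] by (auto simp: gam_def gamma2_adjpow_def)

lemma decay_q:
  assumes "u \<in> L2_0 \<nu>"
  shows "(\<integral>x. ((P ^^ (q * k + r)) u x)\<^sup>2 \<partial>\<nu>) \<le> (1 - gam k) ^ q * (\<integral>x. (u x)\<^sup>2 \<partial>\<nu>)"
  using assms
proof (induction q arbitrary: u)
  case 0
  then show ?case using Pk_props(2)[of u r] by (simp add: l2_0_iff)
next
  case (Suc q)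
  have e: "Suc q * k + r = (q * k + r) + k" by simp
  have "(P ^^ (Suc q * k + r)) u = (P ^^ (q * k + r)) ((P ^^ k) u)"
    unfolding e funpow_add comp_def by (rule refl)
  then have "(\<integral>x. ((P ^^ (Suc q * k + r)) u x)\<^sup>2 \<partial>\<nu>) \<le> (1 - gam k) ^ q * (\<integral>x. ((P ^^ k) u x)\<^sup>2 \<partial>\<nu>)"
    using Suc.IH[OF Pk_L2_0[OF Suc.prems]] by simp
  also have "\<dots> \<le> (1 - gam k) ^ q * ((1 - gam k) * (\<integral>x. (u x)\<^sup>2 \<partial>\<nu>))"
    using decay1[OF Suc.prems, of k] gam_bounds[of k]
    by (intro mult_left_mono) (auto simp: gam_def gamma2_adjpow_def)
  finally show ?case by (simp add: mult_ac)
qed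

lemma decay_m:
  assumes "u \<in> L2_0 \<nu>" "1 \<le> k"
  shows "(\<integral>x. ((P ^^ m) u x)\<^sup>2 \<partial>\<nu>) \<le> (1 - gam k) ^ (m div k) * (\<integral>x. (u x)\<^sup>2 \<partial>\<nu>)"
  using decay_q[OF assms(1), of "m div k" k "m mod k"] by simp

lemma cov_bound:
  assumes g: "g \<in> L2_0 \<nu>" and k: "1 \<le> k"
  shows "\<bar>\<integral>x. g x * (P ^^ m) g x \<partial>\<nu>\<bar> \<le> (\<integral>x. (g x)\<^sup>2 \<partial>\<nu>) * sqrt (1 - gam k) ^ (m div k)"
proof -
  have gl: "l2 g" using g by (simp add: l2_0_iff)
  note pg = Pk_props[OF gl, of m]
  have "\<bar>\<integral>x. g x * (P ^^ m) g x \<partial>\<nu>\<bar> \<le> sqrt (\<integral>x. (g x)\<^sup>2 \<partial>\<nu>) * sqrt (\<integral>x. ((P ^^ m) g x)\<^sup>2 \<partial>\<nu>)"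
    by (rule cs_real(2)) (use gl pg(1) in \<open>auto simp: l2_def meas_nu\<close>)
  also have "\<dots> \<le> sqrt (\<integral>x. (g x)\<^sup>2 \<partial>\<nu>) * sqrt ((1 - gam k) ^ (m div k) * (\<integral>x. (g x)\<^sup>2 \<partial>\<nu>))"
    by (intro mult_left_mono real_sqrt_le_mono decay_m[OF g k]) auto
  also have "\<dots> = (\<integral>x. (g x)\<^sup>2 \<partial>\<nu>) * sqrt (1 - gam k) ^ (m div k)"
    using gam_bounds[of k] by (simp add: real_sqrt_mult real_sqrt_power)
  finally show ?thesis .
qed

lemma cov_sum_bound:
  assumes g: "g \<in> L2_0 \<nu>" and k: "1 \<le> k" and gp: "0 < gam k"
  shows "(\<Sum>m<M. \<bar>\<integral>x. g x * (P ^^ m) g x \<partial>\<nu>\<bar>) \<le> (\<integral>x. (g x)\<^sup>2 \<partial>\<nu>) * (2 * real k / gam k)"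
proof -
  define \<rho> where "\<rho> = sqrt (1 - gam k)"
  have \<rho>: "0 \<le> \<rho>" "\<rho> < 1" using gam_bounds[of k] gp by (auto simp: \<rho>_def)
  have V: "0 \<le> (\<integral>x. (g x)\<^sup>2 \<partial>\<nu>)" by simp
  have "(\<Sum>m<M. \<bar>\<integral>x. g x * (P ^^ m) g x \<partial>\<nu>\<bar>) \<le> (\<Sum>m<M. (\<integral>x. (g x)\<^sup>2 \<partial>\<nu>) * \<rho> ^ (m div k))"
    unfolding \<rho>_def by (intro sum_mono cov_bound[OF g k])
  also have "\<dots> = (\<integral>x. (g x)\<^sup>2 \<partial>\<nu>) * (\<Sum>m<M. \<rho> ^ (m div k))" by (simp add: sum_distrib_left)
  also have "\<dots> \<le> (\<integral>x. (g x)\<^sup>2 \<partial>\<nu>) * (real k / (1 - \<rho>))"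
    by (intro mult_left_mono geom_div_bound \<rho> k V)
  also have "\<dots> \<le> (\<integral>x. (g x)\<^sup>2 \<partial>\<nu>) * (2 * real k / gam k)"
  proof (intro mult_left_mono V)
    have "real k * (1 / (1 - \<rho>)) \<le> real k * (2 / gam k)"
      unfolding \<rho>_def by (intro mult_left_mono sqrt_gap gp gam_bounds) auto
    then show "real k / (1 - \<rho>) \<le> 2 * real k / gam k" by (simp add: mult.commute)
  qed
  finally show ?thesis by (simp add: mult_ac)
qed

lemma pg_bdd: "bdd_above ((\<lambda>k. gam k / real k) ` {1..})"
proof (rule bdd_aboveI[where M=1])
  fix y assume "y \<in> (\<lambda>k. gam k / real k) ` {1..}"
  then obtain k where k: "1 \<le> k" "y = gam k / real k" by auto
  have "gam k / real k \<le> 1 / 1"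
    using gam_bounds[of k] k by (intro frac_le) auto
  then show "y \<le> 1" using k by simp
qed

lemma pg_eq: "pseudo_gap \<nu> K = (SUP k\<in>{1..}. gam k / real k)"
  by (simp add: pseudo_gap_def gam_def)

lemma pg_nonneg: "0 \<le> pseudo_gap \<nu> K"
proof -
  have "gam 1 / real 1 \<le> (SUP k\<in>{1..}. gam k / real k)"
    by (rule cSUP_upper[OF _ pg_bdd]) auto
  then show ?thesis using gam_bounds[of 1] by (simp add: pg_eq)
qed

lemma pg_approx:
  assumes "t < pseudo_gap \<nu> K"
  shows "\<exists>k\<ge>1. t < gam k / real k"
proof -
  have "t < (SUP k\<in>{1..}. gam k / real k)" using assms by (simp add: pg_eq)
  then obtain k where "k \<in> {1..}" "t < gam k / real k"
    using less_cSUP_iff[OF _ pg_bdd] by blast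
  then show ?thesis by auto
qed

end


context ckern begin

abbreviation "PiN (n::nat) \<equiv> PiM {..n} (\<lambda>_. (borel :: ('a \<times> 'a) measure))"

definition "kap n \<omega> = distr (K (\<omega> n)) (PiN (Suc n)) (\<lambda>y. fun_upd \<omega> (Suc n) y)"

lemma K_sub2: "K \<in> borel \<rightarrow>\<^sub>M subprob_algebra borel"
  using measurable_prob_algebraD[OF K_meas] .

lemma upd_meas: "(\<lambda>(\<omega>, y). fun_upd \<omega> (Suc n) y) \<in> PiN n \<Otimes>\<^sub>M borel \<rightarrow>\<^sub>M PiN (Suc n)"
proof -
  have "(\<lambda>x. (fst x)(Suc n := snd x)) \<in> PiN n \<Otimes>\<^sub>M borel \<rightarrow>\<^sub>M PiN (Suc n)"
    by (rule measurable_fun_upd[where J="{..n}"]) auto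
  then show ?thesis by (simp add: case_prod_beta')
qed

lemma upd_meas1: "\<omega> \<in> space (PiN n) \<Longrightarrow> (\<lambda>y. fun_upd \<omega> (Suc n) y) \<in> borel \<rightarrow>\<^sub>M PiN (Suc n)"
  by (rule measurable_fun_upd[where J="{..n}"]) auto

lemma kap_sub: "kap n \<in> PiN n \<rightarrow>\<^sub>M subprob_algebra (PiN (Suc n))"
proof -
  have g: "(\<lambda>\<omega>. K (\<omega> n)) \<in> PiN n \<rightarrow>\<^sub>M subprob_algebra borel"
    by (rule measurable_compose[OF measurable_component_singleton[of n "{..n}" "\<lambda>_. borel"] K_sub2]) simp
  show ?thesis
    unfolding kap_def[abs_def]
    by (rule measurable_distr2[OF _ g]) (use upd_meas in simp)
qed

lemma kap_prob: "\<omega> \<in> space (PiN n) \<Longrightarrow> prob_space (kap n \<omega>)"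
  unfolding kap_def by (rule prob_space.prob_space_distr[OF K_prob]) (simp add: measurable_cong_sets[OF K_sets refl] upd_meas1)

lemma kap_meas: "kap n \<in> PiN n \<rightarrow>\<^sub>M prob_algebra (PiN (Suc n))"
  by (rule measurable_prob_algebraI[OF kap_prob kap_sub])

lemma cp_Suc: "chain_path borel M0 K (Suc n) = chain_path borel M0 K n \<bind> kap n"
  by (simp add: kap_def[abs_def])

lemma emb_meas: "(\<lambda>x. \<lambda>i\<in>{..0::nat}. x) \<in> (borel :: ('a \<times> 'a) measure) \<rightarrow>\<^sub>M PiN 0"
  by (rule measurable_restrict) simp

lemma emb_meas0:
  assumes "sets M0 = sets (borel :: ('a \<times> 'a) measure)"
  shows "(\<lambda>x. \<lambda>i\<in>{..0::nat}. x) \<in> M0 \<rightarrow>\<^sub>M PiN 0"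
  apply (subst measurable_cong_sets[OF assms refl])
  apply (rule emb_meas)
  done

lemma cp_space:
  assumes "prob_space M0" "sets M0 = sets (borel :: ('a \<times> 'a) measure)"
  shows "chain_path borel M0 K n \<in> space (prob_algebra (PiN n))"
proof (induction n)
  case 0
  have "prob_space (distr M0 (PiN 0) (\<lambda>x. \<lambda>i\<in>{..0}. x))"
    by (rule prob_space.prob_space_distr[OF assms(1) emb_meas0[OF assms(2)]])
  moreover have "sets (distr M0 (PiN 0) (\<lambda>x. \<lambda>i\<in>{..0}. x)) = sets (PiN 0)" by (rule sets_distr)
  ultimately show ?case unfolding chain_path.simps(1) space_prob_algebra by blast
next
  case (Suc n)
  have "prob_space (chain_path borel M0 K n \<bind> kap n)" by (rule prob_space_bind'[OF Suc kap_meas])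
  moreover have "sets (chain_path borel M0 K n \<bind> kap n) = sets (PiN (Suc n))" by (rule sets_bind'[OF Suc kap_meas])
  ultimately show ?case unfolding cp_Suc space_prob_algebra by blast
qed

lemma cp_props:
  assumes "prob_space M0" "sets M0 = sets (borel :: ('a \<times> 'a) measure)"
  shows "prob_space (chain_path borel M0 K n)" "sets (chain_path borel M0 K n) = sets (PiN n)"
    "space (chain_path borel M0 K n) \<noteq> {}"
  using cp_space[OF assms, of n] by (auto simp: space_prob_algebra dest: prob_space.not_empty)

lemma kap_sub': 
  assumes "prob_space M0" "sets M0 = sets (borel :: ('a \<times> 'a) measure)"
  shows "kap n \<in> chain_path borel M0 K n \<rightarrow>\<^sub>M subprob_algebra (PiN (Suc n))"
  using kap_sub by (simp add: measurable_cong_sets[OF cp_props(2)[OF assms] refl])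

lemma nn_cp_Suc:
  assumes M0: "prob_space M0" "sets M0 = sets (borel :: ('a \<times> 'a) measure)"
    and F: "F \<in> borel_measurable (PiN (Suc n))"
  shows "(\<integral>\<^sup>+ \<omega>. F \<omega> \<partial>chain_path borel M0 K (Suc n))
     = (\<integral>\<^sup>+ \<omega>. (\<integral>\<^sup>+ y. F (fun_upd \<omega> (Suc n) y) \<partial>K (\<omega> n)) \<partial>chain_path borel M0 K n)"
proof -
  have "(\<integral>\<^sup>+ \<omega>. F \<omega> \<partial>chain_path borel M0 K (Suc n))
      = (\<integral>\<^sup>+ \<omega>. (\<integral>\<^sup>+ y. F y \<partial>kap n \<omega>) \<partial>chain_path borel M0 K n)"
    unfolding cp_Suc by (rule nn_integral_bind[OF F kap_sub'[OF M0]])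
  also have "\<dots> = (\<integral>\<^sup>+ \<omega>. (\<integral>\<^sup>+ y. F (fun_upd \<omega> (Suc n) y) \<partial>K (\<omega> n)) \<partial>chain_path borel M0 K n)"
  proof (rule nn_integral_cong)
    fix \<omega> assume "\<omega> \<in> space (chain_path borel M0 K n)"
    then have w: "\<omega> \<in> space (PiN n)" using sets_eq_imp_space_eq[OF cp_props(2)[OF M0]] by simp
    show "(\<integral>\<^sup>+ y. F y \<partial>kap n \<omega>) = (\<integral>\<^sup>+ y. F (fun_upd \<omega> (Suc n) y) \<partial>K (\<omega> n))"
      unfolding kap_def
      by (rule nn_integral_distr) (use upd_meas1[OF w] F in \<open>simp_all add: measurable_cong_sets[OF K_sets refl]\<close>)
  qed
  finally show ?thesis .
qed

lemma int_cp_Suc: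
  fixes F :: "_ \<Rightarrow> real"
  assumes M0: "prob_space M0" "sets M0 = sets (borel :: ('a \<times> 'a) measure)"
    and F: "F \<in> borel_measurable (PiN (Suc n))"
    and Fi: "integrable (chain_path borel M0 K (Suc n)) F"
  shows "(\<integral>\<omega>. F \<omega> \<partial>chain_path borel M0 K (Suc n))
     = (\<integral>\<omega>. (\<integral>y. F (fun_upd \<omega> (Suc n) y) \<partial>K (\<omega> n)) \<partial>chain_path borel M0 K n)"
proof -
  have Fi': "integrable (chain_path borel M0 K n \<bind> kap n) F" using Fi by (simp only: cp_Suc)
  have "(\<integral>\<omega>. F \<omega> \<partial>chain_path borel M0 K (Suc n))
      = (\<integral>\<omega>. (\<integral>y. F y \<partial>kap n \<omega>) \<partial>chain_path borel M0 K n)"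
    unfolding cp_Suc by (rule integral_bind_gen(3)[OF kap_sub'[OF M0] F cp_props(3)[OF M0] Fi'])
  also have "\<dots> = (\<integral>\<omega>. (\<integral>y. F (fun_upd \<omega> (Suc n) y) \<partial>K (\<omega> n)) \<partial>chain_path borel M0 K n)"
  proof (rule Bochner_Integration.integral_cong[OF refl])
    fix \<omega> assume "\<omega> \<in> space (chain_path borel M0 K n)"
    then have w: "\<omega> \<in> space (PiN n)" using sets_eq_imp_space_eq[OF cp_props(2)[OF M0]] by simp
    show "(\<integral>y. F y \<partial>kap n \<omega>) = (\<integral>y. F (fun_upd \<omega> (Suc n) y) \<partial>K (\<omega> n))"
      unfolding kap_def
      by (rule integral_distr) (use upd_meas1[OF w] F in \<open>simp_all add: measurable_cong_sets[OF K_sets refl]\<close>)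
  qed
  finally show ?thesis .
qed

lemma cp_compare:
  assumes M0: "prob_space M0" "sets M0 = sets (borel :: ('a \<times> 'a) measure)"
    and M1: "prob_space M1" "sets M1 = sets (borel :: ('a \<times> 'a) measure)"
    and cmp: "\<And>G. G \<in> borel_measurable (borel :: ('a \<times> 'a) measure) \<Longrightarrow>
                (\<integral>\<^sup>+ x. G x \<partial>M0) \<le> C * (\<integral>\<^sup>+ x. G x \<partial>M1)"
  shows "F \<in> borel_measurable (PiN n) \<Longrightarrow>
     (\<integral>\<^sup>+ \<omega>. F \<omega> \<partial>chain_path borel M0 K n) \<le> C * (\<integral>\<^sup>+ \<omega>. F \<omega> \<partial>chain_path borel M1 K n)"
proof (induction n arbitrary: F)
  case 0
  have Fm: "(\<lambda>x. F (\<lambda>i\<in>{..0}. x)) \<in> borel_measurable borel"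
    by (rule measurable_compose[OF emb_meas 0])
  have "(\<integral>\<^sup>+ \<omega>. F \<omega> \<partial>chain_path borel M0 K 0) = (\<integral>\<^sup>+ x. F (\<lambda>i\<in>{..0}. x) \<partial>M0)"
    unfolding chain_path.simps(1)
    by (rule nn_integral_distr) (simp_all only: measurable_cong_sets[OF M0(2) refl] emb_meas 0 measurable_distr_eq1)
  also have "\<dots> \<le> C * (\<integral>\<^sup>+ x. F (\<lambda>i\<in>{..0}. x) \<partial>M1)" by (rule cmp[OF Fm])
  also have "(\<integral>\<^sup>+ x. F (\<lambda>i\<in>{..0}. x) \<partial>M1) = (\<integral>\<^sup>+ \<omega>. F \<omega> \<partial>chain_path borel M1 K 0)"
    unfolding chain_path.simps(1)
    by (rule nn_integral_distr[symmetric]) (simp_all only: measurable_cong_sets[OF M1(2) refl] emb_meas 0 measurable_distr_eq1)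
  finally show ?case .
next
  case (Suc n)
  define G where "G \<omega> = (\<integral>\<^sup>+ y. F y \<partial>kap n \<omega>)" for \<omega>
  have Gm: "G \<in> borel_measurable (PiN n)"
    unfolding G_def by (rule measurable_compose[OF kap_sub nn_integral_measurable_subprob_algebra[OF Suc.prems]])
  have "(\<integral>\<^sup>+ \<omega>. F \<omega> \<partial>chain_path borel M0 K (Suc n)) = (\<integral>\<^sup>+ \<omega>. G \<omega> \<partial>chain_path borel M0 K n)"
    unfolding cp_Suc G_def by (rule nn_integral_bind[OF Suc.prems kap_sub'[OF M0]])
  also have "\<dots> \<le> C * (\<integral>\<^sup>+ \<omega>. G \<omega> \<partial>chain_path borel M1 K n)" by (rule Suc.IH[OF Gm])
  also have "(\<integral>\<^sup>+ \<omega>. G \<omega> \<partial>chain_path borel M1 K n) = (\<integral>\<^sup>+ \<omega>. F \<omega> \<partial>chain_path borel M1 K (Suc n))"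
    unfolding cp_Suc G_def by (rule nn_integral_bind[OF Suc.prems kap_sub'[OF M1], symmetric])
  finally show ?case .
qed

end


context stat begin

abbreviation "cpn n \<equiv> chain_path borel \<nu> K n"

lemma cpn_props: "prob_space (cpn n)" "sets (cpn n) = sets (PiN n)" "space (cpn n) \<noteq> {}"
  using cp_props[OF nu_prob nu_sets] by auto

lemma cpn_space: "space (cpn n) = space (PiN n)"
  using sets_eq_imp_space_eq[OF cpn_props(2)] .

lemma comp_meas: "i \<le> n \<Longrightarrow> (\<lambda>\<omega>. \<omega> i) \<in> PiN n \<rightarrow>\<^sub>M borel"
  by (rule measurable_component_singleton) simp

lemma comp_meas': "i \<le> n \<Longrightarrow> (\<lambda>\<omega>. \<omega> i) \<in> cpn n \<rightarrow>\<^sub>M borel"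
  using comp_meas by (simp add: measurable_cong_sets[OF cpn_props(2) refl])

lemma marg_nn:
  assumes "\<phi> \<in> borel_measurable (borel :: ('a \<times> 'a) measure)" "i \<le> n"
  shows "(\<integral>\<^sup>+ \<omega>. \<phi> (\<omega> i) \<partial>cpn n) = (\<integral>\<^sup>+ x. \<phi> x \<partial>\<nu>)"
  using assms
proof (induction n arbitrary: i \<phi>)
  case 0
  then have i: "i = 0" by simp
  have "(\<integral>\<^sup>+ \<omega>. \<phi> (\<omega> i) \<partial>cpn 0) = (\<integral>\<^sup>+ x. \<phi> ((\<lambda>i\<in>{..0}. x) i) \<partial>\<nu>)"
    unfolding chain_path.simps(1)
    by (rule nn_integral_distr[OF emb_meas0[OF nu_sets]])
       (simp only: measurable_distr_eq1, rule measurable_compose[OF comp_meas 0(1)], simp add: i)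
  then show ?case by (simp add: i)
next
  case (Suc n)
  have Fm: "(\<lambda>\<omega>. \<phi> (\<omega> i)) \<in> borel_measurable (PiN (Suc n))"
    by (rule measurable_compose[OF comp_meas Suc.prems(1)]) (use Suc.prems in simp)
  have "(\<integral>\<^sup>+ \<omega>. \<phi> (\<omega> i) \<partial>cpn (Suc n))
     = (\<integral>\<^sup>+ \<omega>. (\<integral>\<^sup>+ y. \<phi> ((fun_upd \<omega> (Suc n) y) i) \<partial>K (\<omega> n)) \<partial>cpn n)"
    by (rule nn_cp_Suc[OF nu_prob nu_sets Fm])
  also have "\<dots> = (\<integral>\<^sup>+ x. \<phi> x \<partial>\<nu>)"
  proof (cases "i \<le> n")
    case True
    have "(\<integral>\<^sup>+ \<omega>. (\<integral>\<^sup>+ y. \<phi> ((fun_upd \<omega> (Suc n) y) i) \<partial>K (\<omega> n)) \<partial>cpn n)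
        = (\<integral>\<^sup>+ \<omega>. \<phi> (\<omega> i) \<partial>cpn n)"
    proof (rule nn_integral_cong)
      fix \<omega>
      have "i \<noteq> Suc n" using True by simp
      then have "(\<integral>\<^sup>+ y. \<phi> ((fun_upd \<omega> (Suc n) y) i) \<partial>K (\<omega> n)) = (\<integral>\<^sup>+ y. \<phi> (\<omega> i) \<partial>K (\<omega> n))" by simp
      also have "\<dots> = \<phi> (\<omega> i)"
        using prob_space.emeasure_space_1[OF K_prob[of "\<omega> n"]] by simp
      finally show "(\<integral>\<^sup>+ y. \<phi> ((fun_upd \<omega> (Suc n) y) i) \<partial>K (\<omega> n)) = \<phi> (\<omega> i)" .
    qed
    also have "\<dots> = (\<integral>\<^sup>+ x. \<phi> x \<partial>\<nu>)" by (rule Suc.IH[OF Suc.prems(1) True])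
    finally show ?thesis .
  next
    case False
    then have i: "i = Suc n" using Suc.prems by simp
    define H where "H x = (\<integral>\<^sup>+ y. \<phi> y \<partial>K x)" for x
    have Hm: "H \<in> borel_measurable borel"
      unfolding H_def by (rule measurable_compose[OF K_sub2 nn_integral_measurable_subprob_algebra[OF Suc.prems(1)]])
    have "(\<integral>\<^sup>+ \<omega>. (\<integral>\<^sup>+ y. \<phi> ((fun_upd \<omega> (Suc n) y) i) \<partial>K (\<omega> n)) \<partial>cpn n)
        = (\<integral>\<^sup>+ \<omega>. H (\<omega> n) \<partial>cpn n)"
      by (simp add: i H_def)
    also have "\<dots> = (\<integral>\<^sup>+ x. H x \<partial>\<nu>)" by (rule Suc.IH[OF Hm]) simp
    also have "\<dots> = (\<integral>\<^sup>+ x. \<phi> x \<partial>(\<nu> \<bind> K))"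
      unfolding H_def by (rule nn_integral_bind[OF Suc.prems(1) K_sub, symmetric])
    also have "\<dots> = (\<integral>\<^sup>+ x. \<phi> x \<partial>\<nu>)" by (simp add: nu_bind)
    finally show ?thesis .
  qed
  finally show ?case .
qed

lemma marg:
  assumes "i \<le> n"
  shows "distr (cpn n) borel (\<lambda>\<omega>. \<omega> i) = \<nu>"
proof (rule measure_eqI)
  show "sets (distr (cpn n) borel (\<lambda>\<omega>. \<omega> i)) = sets \<nu>" by (simp add: nu_sets)
  fix A assume "A \<in> sets (distr (cpn n) borel (\<lambda>\<omega>. \<omega> i))"
  then have A: "A \<in> sets (borel :: ('a \<times> 'a) measure)" by simp
  have "emeasure (distr (cpn n) borel (\<lambda>\<omega>. \<omega> i)) A = (\<integral>\<^sup>+ x. indicator A x \<partial>distr (cpn n) borel (\<lambda>\<omega>. \<omega> i))"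
    using A by simp
  also have "\<dots> = (\<integral>\<^sup>+ \<omega>. indicator A (\<omega> i) \<partial>cpn n)"
    by (rule nn_integral_distr[OF comp_meas'[OF assms]]) (use A in simp)
  also have "\<dots> = (\<integral>\<^sup>+ x. indicator A x \<partial>\<nu>)"
    by (rule marg_nn[OF _ assms]) (use A in simp)
  also have "\<dots> = emeasure \<nu> A" using A by (simp add: nu_sets)
  finally show "emeasure (distr (cpn n) borel (\<lambda>\<omega>. \<omega> i)) A = emeasure \<nu> A" .
qed

lemma l2_path:
  assumes "l2 f" "i \<le> n"
  shows "integrable (cpn n) (\<lambda>\<omega>. (f (\<omega> i))\<^sup>2)" "(\<lambda>\<omega>. f (\<omega> i)) \<in> borel_measurable (cpn n)"
proof -
  have fm: "f \<in> borel_measurable borel" using assms by (simp add: l2_def)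
  have "integrable (distr (cpn n) borel (\<lambda>\<omega>. \<omega> i)) (\<lambda>x. (f x)\<^sup>2)"
    using assms by (simp add: marg l2_def)
  then show "integrable (cpn n) (\<lambda>\<omega>. (f (\<omega> i))\<^sup>2)"
    by (subst (asm) integrable_distr_eq[OF comp_meas'[OF assms(2)]]) (use fm in simp_all)
  show "(\<lambda>\<omega>. f (\<omega> i)) \<in> borel_measurable (cpn n)"
    by (rule measurable_compose[OF comp_meas'[OF assms(2)] fm])
qed

lemma corr_int:
  assumes "l2 f" "l2 g" "i \<le> n" "j \<le> n"
  shows "integrable (cpn n) (\<lambda>\<omega>. f (\<omega> i) * g (\<omega> j))"
  using l2_path[OF assms(1,3)] l2_path[OF assms(2,4)] by (intro cs_real(1)) auto

lemma corr_diag: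
  assumes "l2 f" "l2 g" "i \<le> n"
  shows "(\<integral>\<omega>. f (\<omega> i) * g (\<omega> i) \<partial>cpn n) = (\<integral>x. f x * g x \<partial>\<nu>)"
proof -
  have fm: "f \<in> borel_measurable borel" "g \<in> borel_measurable borel" using assms by (auto simp: l2_def)
  have "(\<integral>x. f x * g x \<partial>distr (cpn n) borel (\<lambda>\<omega>. \<omega> i)) = (\<integral>\<omega>. f (\<omega> i) * g (\<omega> i) \<partial>cpn n)"
    by (rule integral_distr[OF comp_meas'[OF assms(3)]]) (use fm in simp)
  then show ?thesis by (simp add: marg[OF assms(3)])
qed

lemma corr:
  assumes "l2 f" "l2 g" "i \<le> j" "j \<le> n"
  shows "(\<integral>\<omega>. f (\<omega> i) * g (\<omega> j) \<partial>cpn n) = (\<integral>x. f x * (P ^^ (j - i)) g x \<partial>\<nu>)"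
  using assms
proof (induction n arbitrary: i j f g)
  case 0
  then have "i = 0" "j = 0" by auto
  then show ?case using corr_diag[OF 0(1,2), of 0 0] by (simp del: chain_path.simps)
next
  case (Suc n)
  show ?case
  proof (cases "i = j")
    case True
    then show ?thesis using corr_diag[OF Suc.prems(1,2), of j "Suc n"] Suc.prems by (simp del: chain_path.simps)
  next
    case False
    then have ij: "i < j" using Suc.prems by simp
    have fm: "f \<in> borel_measurable borel" "g \<in> borel_measurable borel" using Suc.prems by (auto simp: l2_def)
    have Fm: "(\<lambda>\<omega>. f (\<omega> i) * g (\<omega> j)) \<in> borel_measurable (PiN (Suc n))"
      using Suc.prems ij
      by (intro borel_measurable_times measurable_compose[OF comp_meas fm(1)] measurable_compose[OF comp_meas fm(2)]) auto
    have Fi: "integrable (cpn (Suc n)) (\<lambda>\<omega>. f (\<omega> i) * g (\<omega> j))"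
      using Suc.prems ij by (intro corr_int) auto
    have step: "(\<integral>\<omega>. f (\<omega> i) * g (\<omega> j) \<partial>cpn (Suc n))
      = (\<integral>\<omega>. (\<integral>y. f ((fun_upd \<omega> (Suc n) y) i) * g ((fun_upd \<omega> (Suc n) y) j) \<partial>K (\<omega> n)) \<partial>cpn n)"
      by (rule int_cp_Suc[OF nu_prob nu_sets Fm Fi])
    show ?thesis
    proof (cases "j \<le> n")
      case True
      have "(\<integral>\<omega>. (\<integral>y. f ((fun_upd \<omega> (Suc n) y) i) * g ((fun_upd \<omega> (Suc n) y) j) \<partial>K (\<omega> n)) \<partial>cpn n)
          = (\<integral>\<omega>. f (\<omega> i) * g (\<omega> j) \<partial>cpn n)"
      proof (rule Bochner_Integration.integral_cong[OF refl])
        fix \<omega>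
        have "i \<noteq> Suc n" "j \<noteq> Suc n" using True ij by auto
        then have "(\<integral>y. f ((fun_upd \<omega> (Suc n) y) i) * g ((fun_upd \<omega> (Suc n) y) j) \<partial>K (\<omega> n))
            = (\<integral>y. f (\<omega> i) * g (\<omega> j) \<partial>K (\<omega> n))" by simp
        also have "\<dots> = f (\<omega> i) * g (\<omega> j)"
          using prob_space.prob_space[OF K_prob[of "\<omega> n"]] by simp
        finally show "(\<integral>y. f ((fun_upd \<omega> (Suc n) y) i) * g ((fun_upd \<omega> (Suc n) y) j) \<partial>K (\<omega> n))
            = f (\<omega> i) * g (\<omega> j)" .
      qed
      also have "\<dots> = (\<integral>x. f x * (P ^^ (j - i)) g x \<partial>\<nu>)"
        by (rule Suc.IH[OF Suc.prems(1,2,3) True])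
      finally show ?thesis using step by simp
    next
      case False
      then have j: "j = Suc n" using Suc.prems by simp
      have in': "i \<le> n" using ij j by simp
      have "(\<integral>\<omega>. (\<integral>y. f ((fun_upd \<omega> (Suc n) y) i) * g ((fun_upd \<omega> (Suc n) y) j) \<partial>K (\<omega> n)) \<partial>cpn n)
          = (\<integral>\<omega>. f (\<omega> i) * P g (\<omega> n) \<partial>cpn n)"
      proof (rule Bochner_Integration.integral_cong[OF refl])
        fix \<omega>
        have "i \<noteq> Suc n" using in' by auto
        then show "(\<integral>y. f ((fun_upd \<omega> (Suc n) y) i) * g ((fun_upd \<omega> (Suc n) y) j) \<partial>K (\<omega> n))
            = f (\<omega> i) * P g (\<omega> n)" by (simp add: j markov_op_def)
      qed
      also have "\<dots> = (\<integral>x. f x * (P ^^ (n - i)) (P g) x \<partial>\<nu>)"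
        by (rule Suc.IH[OF Suc.prems(1) P_props(3)[OF Suc.prems(2)] in']) simp
      also have "(P ^^ (n - i)) (P g) = (P ^^ (j - i)) g"
        using in' by (simp add: j Suc_diff_le funpow_swap1)
      finally show ?thesis using step by simp
    qed
  qed
qed

end


lemma sum_reindex_le:
  fixes h :: "nat \<Rightarrow> real"
  assumes "inj_on \<phi> A" "\<phi> ` A \<subseteq> {..<N}" "\<And>m. 0 \<le> h m" "finite A"
  shows "(\<Sum>b\<in>A. h (\<phi> b)) \<le> (\<Sum>m<N. h m)"
proof -
  have "(\<Sum>b\<in>A. h (\<phi> b)) = (\<Sum>m\<in>\<phi> ` A. h m)" using sum.reindex[OF assms(1), of h] by simp
  also have "\<dots> \<le> (\<Sum>m<N. h m)" by (rule sum_mono2) (use assms in auto)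
  finally show ?thesis .
qed

lemma sum_dist:
  fixes h :: "nat \<Rightarrow> real"
  assumes a: "a \<in> {1..N}" and h: "\<And>m. 0 \<le> h m"
  shows "(\<Sum>b\<in>{1..N}. h (if a \<le> b then b - a else a - b)) \<le> 2 * (\<Sum>m<N. h m)"
proof -
  have "(\<Sum>b\<in>{1..N}. h (if a \<le> b then b - a else a - b)) = (\<Sum>b\<in>{1..N}. if a \<le> b then h (b - a) else h (a - b))"
    by (rule sum.cong) auto
  also have "\<dots> = (\<Sum>b\<in>{1..N} \<inter> {b. a \<le> b}. h (b - a)) + (\<Sum>b\<in>{1..N} \<inter> - {b. a \<le> b}. h (a - b))"
    by (rule sum.If_cases) simp
  also have "(\<Sum>b\<in>{1..N} \<inter> {b. a \<le> b}. h (b - a)) \<le> (\<Sum>m<N. h m)"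
    by (rule sum_reindex_le[OF _ _ h]) (use a in \<open>auto simp: inj_on_def\<close>)
  also have "(\<Sum>b\<in>{1..N} \<inter> - {b. a \<le> b}. h (a - b)) \<le> (\<Sum>m<N. h m)"
    by (rule sum_reindex_le[OF _ _ h]) (use a in \<open>auto simp: inj_on_def\<close>)
  finally show ?thesis by simp
qed

context stat begin

definition "cc g m = \<bar>\<integral>x. g x * (P ^^ m) g x \<partial>\<nu>\<bar>"

lemma pair_corr:
  assumes g: "l2 g" and ab: "a \<le> T" "b \<le> T"
  shows "\<bar>\<integral>\<omega>. g (\<omega> a) * g (\<omega> b) \<partial>cpn T\<bar> = cc g (if a \<le> b then b - a else a - b)"
proof (cases "a \<le> b")
  case True
  then show ?thesis using corr[OF g g True ab(2)] by (simp add: cc_def)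
next
  case False
  then have ba: "b \<le> a" by simp
  have "(\<integral>\<omega>. g (\<omega> a) * g (\<omega> b) \<partial>cpn T) = (\<integral>\<omega>. g (\<omega> b) * g (\<omega> a) \<partial>cpn T)"
    by (simp add: mult.commute)
  then show ?thesis using corr[OF g g ba ab(1)] False by (simp add: cc_def)
qed

lemma mse_stat_bound:
  fixes nb :: nat
  assumes g: "g \<in> L2_0 \<nu>" and N: "1 \<le> N"
  defines "Z \<equiv> (\<lambda>\<omega>. 1 / real N * (\<Sum>n = 1..N. g (\<omega> (n + nb))))"
  shows "integrable (cpn (N + nb)) (\<lambda>\<omega>. (Z \<omega>)\<^sup>2)"
    and "(\<integral>\<omega>. (Z \<omega>)\<^sup>2 \<partial>cpn (N + nb)) \<le> (1 / real N)\<^sup>2 * (real N * (2 * (\<Sum>m<N. cc g m)))"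
proof -
  have gl: "l2 g" using g by (simp add: l2_0_iff)
  let ?T = "N + nb"
  have sq: "(Z \<omega>)\<^sup>2 = (1 / real N)\<^sup>2 * (\<Sum>a\<in>{1..N}. \<Sum>b\<in>{1..N}. g (\<omega> (a + nb)) * g (\<omega> (b + nb)))" for \<omega>
    unfolding Z_def power_mult_distrib by (simp add: power2_eq_square sum_product)
  have ii: "integrable (cpn ?T) (\<lambda>\<omega>. g (\<omega> (a + nb)) * g (\<omega> (b + nb)))" if "a \<in> {1..N}" "b \<in> {1..N}" for a b
    by (rule corr_int[OF gl gl]) (use that in auto)
  show "integrable (cpn ?T) (\<lambda>\<omega>. (Z \<omega>)\<^sup>2)"
    unfolding sq by (intro integrable_mult_right Bochner_Integration.integrable_sum ii)
  have "(\<integral>\<omega>. (Z \<omega>)\<^sup>2 \<partial>cpn ?T) = (1 / real N)\<^sup>2 * (\<Sum>a\<in>{1..N}. \<Sum>b\<in>{1..N}. (\<integral>\<omega>. g (\<omega> (a + nb)) * g (\<omega> (b + nb)) \<partial>cpn ?T))"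
  proof -
    have e2: "(\<integral>\<omega>. (\<Sum>b\<in>{1..N}. g (\<omega> (a + nb)) * g (\<omega> (b + nb))) \<partial>cpn ?T)
       = (\<Sum>b\<in>{1..N}. (\<integral>\<omega>. g (\<omega> (a + nb)) * g (\<omega> (b + nb)) \<partial>cpn ?T))" if "a \<in> {1..N}" for a
      by (rule Bochner_Integration.integral_sum) (rule ii[OF that])
    have "(\<integral>\<omega>. (\<Sum>a\<in>{1..N}. \<Sum>b\<in>{1..N}. g (\<omega> (a + nb)) * g (\<omega> (b + nb))) \<partial>cpn ?T)
       = (\<Sum>a\<in>{1..N}. (\<integral>\<omega>. (\<Sum>b\<in>{1..N}. g (\<omega> (a + nb)) * g (\<omega> (b + nb))) \<partial>cpn ?T))"
      by (rule Bochner_Integration.integral_sum) (intro Bochner_Integration.integrable_sum ii)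
    also have "\<dots> = (\<Sum>a\<in>{1..N}. \<Sum>b\<in>{1..N}. (\<integral>\<omega>. g (\<omega> (a + nb)) * g (\<omega> (b + nb)) \<partial>cpn ?T))"
      by (rule sum.cong[OF refl]) (rule e2)
    finally show ?thesis unfolding sq by simp
  qed
  also have "\<dots> \<le> (1 / real N)\<^sup>2 * (\<Sum>a\<in>{1..N}. \<Sum>b\<in>{1..N}. cc g (if a + nb \<le> b + nb then b + nb - (a + nb) else a + nb - (b + nb)))"
  proof (intro mult_left_mono sum_mono)
    fix a b assume "a \<in> {1..N}" "b \<in> {1..N}"
    then show "(\<integral>\<omega>. g (\<omega> (a + nb)) * g (\<omega> (b + nb)) \<partial>cpn ?T) \<le> cc g (if a + nb \<le> b + nb then b + nb - (a + nb) else a + nb - (b + nb))"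
      using pair_corr[OF gl, of "a + nb" ?T "b + nb"] by auto
  qed simp
  also have "\<dots> = (1 / real N)\<^sup>2 * (\<Sum>a\<in>{1..N}. \<Sum>b\<in>{1..N}. cc g (if a \<le> b then b - a else a - b))"
    by (simp only: add_le_cancel_right add_diff_cancel_right)
  also have "\<dots> \<le> (1 / real N)\<^sup>2 * (\<Sum>a\<in>{1..N}. 2 * (\<Sum>m<N. cc g m))"
    by (intro mult_left_mono sum_mono sum_dist) (auto simp: cc_def)
  also have "\<dots> = (1 / real N)\<^sup>2 * (real N * (2 * (\<Sum>m<N. cc g m)))" by simp
  finally show "(\<integral>\<omega>. (Z \<omega>)\<^sup>2 \<partial>cpn ?T) \<le> (1 / real N)\<^sup>2 * (real N * (2 * (\<Sum>m<N. cc g m)))" .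
qed

end


context stat begin

lemma cc_le_V:
  assumes g: "g \<in> L2_0 \<nu>"
  shows "cc g m \<le> (\<integral>x. (g x)\<^sup>2 \<partial>\<nu>)"
proof -
  have "cc g m \<le> (\<integral>x. (g x)\<^sup>2 \<partial>\<nu>) * sqrt (1 - gam 1) ^ (m div 1)"
    unfolding cc_def by (rule cov_bound[OF g]) simp
  also have "\<dots> \<le> (\<integral>x. (g x)\<^sup>2 \<partial>\<nu>) * 1"
    using gam_bounds[of 1] by (intro mult_left_mono power_le_one) auto
  finally show ?thesis by simp
qed

lemma mse_stat_triv:
  fixes nb :: nat
  assumes g: "g \<in> L2_0 \<nu>" and N: "1 \<le> N"
  shows "(\<integral>\<omega>. (1 / real N * (\<Sum>n = 1..N. g (\<omega> (n + nb))))\<^sup>2 \<partial>cpn (N + nb)) \<le> 2 * (\<integral>x. (g x)\<^sup>2 \<partial>\<nu>)"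
proof -
  have "(\<Sum>m<N. cc g m) \<le> (\<Sum>m<N. (\<integral>x. (g x)\<^sup>2 \<partial>\<nu>))" by (intro sum_mono cc_le_V[OF g])
  also have "\<dots> = real N * (\<integral>x. (g x)\<^sup>2 \<partial>\<nu>)" by simp
  finally have s: "(\<Sum>m<N. cc g m) \<le> real N * (\<integral>x. (g x)\<^sup>2 \<partial>\<nu>)" .
  have "(\<integral>\<omega>. (1 / real N * (\<Sum>n = 1..N. g (\<omega> (n + nb))))\<^sup>2 \<partial>cpn (N + nb))
      \<le> (1 / real N)\<^sup>2 * (real N * (2 * (\<Sum>m<N. cc g m)))"
    by (rule mse_stat_bound(2)[OF g N])
  also have "\<dots> \<le> (1 / real N)\<^sup>2 * (real N * (2 * (real N * (\<integral>x. (g x)\<^sup>2 \<partial>\<nu>))))"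
    using s by (intro mult_left_mono) auto
  also have "\<dots> = 2 * (\<integral>x. (g x)\<^sup>2 \<partial>\<nu>)" using N by (simp add: power2_eq_square field_simps)
  finally show ?thesis .
qed

lemma mse_stat_k:
  fixes nb :: nat
  assumes g: "g \<in> L2_0 \<nu>" and N: "1 \<le> N" and k: "1 \<le> k" and gp: "0 < gam k"
  shows "(\<integral>\<omega>. (1 / real N * (\<Sum>n = 1..N. g (\<omega> (n + nb))))\<^sup>2 \<partial>cpn (N + nb))
     \<le> 4 * (\<integral>x. (g x)\<^sup>2 \<partial>\<nu>) / ((gam k / real k) * real N)"
proof -
  have "(\<integral>\<omega>. (1 / real N * (\<Sum>n = 1..N. g (\<omega> (n + nb))))\<^sup>2 \<partial>cpn (N + nb))
      \<le> (1 / real N)\<^sup>2 * (real N * (2 * (\<Sum>m<N. cc g m)))"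
    by (rule mse_stat_bound(2)[OF g N])
  also have "\<dots> \<le> (1 / real N)\<^sup>2 * (real N * (2 * ((\<integral>x. (g x)\<^sup>2 \<partial>\<nu>) * (2 * real k / gam k))))"
    using cov_sum_bound[OF g k gp, of N] unfolding cc_def by (intro mult_left_mono) auto
  also have "\<dots> = 4 * (\<integral>x. (g x)\<^sup>2 \<partial>\<nu>) / ((gam k / real k) * real N)"
    using N k gp by (simp add: power2_eq_square field_simps)
  finally show ?thesis .
qed

lemma mse_stat_gap:
  fixes nb :: nat
  assumes g: "g \<in> L2_0 \<nu>" and N: "1 \<le> N" and gp: "0 < pseudo_gap \<nu> K"
  shows "(\<integral>\<omega>. (1 / real N * (\<Sum>n = 1..N. g (\<omega> (n + nb))))\<^sup>2 \<partial>cpn (N + nb))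
     \<le> 4 * (\<integral>x. (g x)\<^sup>2 \<partial>\<nu>) / (pseudo_gap \<nu> K * real N)"
proof (rule ccontr)
  define E where "E = (\<integral>\<omega>. (1 / real N * (\<Sum>n = 1..N. g (\<omega> (n + nb))))\<^sup>2 \<partial>cpn (N + nb))"
  define V where "V = (\<integral>x. (g x)\<^sup>2 \<partial>\<nu>)"
  define \<gamma> where "\<gamma> = pseudo_gap \<nu> K"
  assume a: "\<not> ?thesis"
  have lt: "4 * V / (\<gamma> * real N) < E" using a unfolding E_def V_def \<gamma>_def by simp
  have V0: "0 \<le> V" unfolding V_def by simp
  have Np: "0 < real N" using N by simp
  have gpos: "0 < \<gamma>" using gp by (simp add: \<gamma>_def)
  have "0 \<le> 4 * V / (\<gamma> * real N)" using V0 gpos Np by simp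
  then have Ep: "0 < E" using lt by simp
  have Vp: "0 < V"
  proof (rule ccontr)
    assume "\<not> 0 < V"
    then have "V = 0" using V0 by simp
    then have "E \<le> 0" using mse_stat_triv[OF g N, of nb] unfolding E_def V_def by simp
    then show False using Ep by simp
  qed
  define t where "t = 4 * V / (E * real N)"
  have tpos: "0 < t" unfolding t_def using Vp Ep Np by simp
  have "t < \<gamma>"
  proof -
    have "4 * V < E * (\<gamma> * real N)" using lt gpos Np by (simp add: field_simps)
    then show ?thesis unfolding t_def using Ep Np by (simp add: field_simps)
  qed
  then obtain k where k: "1 \<le> k" "t < gam k / real k" using pg_approx unfolding \<gamma>_def by blast
  have gkk: "0 < gam k / real k" using k tpos by linarith
  have gk: "0 < gam k" using gkk k(1) by (simp add: zero_less_divide_iff)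
  have "E \<le> 4 * V / ((gam k / real k) * real N)"
    using mse_stat_k[OF g N k(1) gk, of nb] unfolding E_def V_def .
  also have "\<dots> < 4 * V / (t * real N)"
  proof -
    have a1: "t * real N < (gam k / real k) * real N" using k(2) Np by (rule mult_strict_right_mono)
    have a2: "0 < 4 * V" using Vp by simp
    have a3: "0 < (gam k / real k * real N) * (t * real N)" using gk k(1) tpos Np by simp
    show ?thesis using divide_strict_left_mono[OF a1 a2 a3] .
  qed
  also have "\<dots> = E" unfolding t_def using Ep Np Vp by (simp add: field_simps)
  finally show False by simp
qed

end


context stat begin

lemma esssup_nonneg_nu:
  assumes "\<And>x. 0 \<le> f x"
  shows "0 \<le> esssup \<nu> (f :: _ \<Rightarrow> ereal)"
proof -
  have nz: "emeasure \<nu> (space \<nu>) \<noteq> 0" using prob_space.emeasure_space_1[OF nu_prob] by simp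
  have "esssup \<nu> (\<lambda>x. 0::ereal) \<le> esssup \<nu> f"
    by (rule esssup_mono) (use assms in auto)
  then show ?thesis using esssup_const[OF nz, of "0::ereal"] by simp
qed

lemma init_cmp:
  assumes p0: "prob_space \<nu>0" and s0: "sets \<nu>0 = sets (borel :: ('a \<times> 'a) measure)"
    and ac: "absolutely_continuous \<nu> \<nu>0"
    and bd: "esssup \<nu> (\<lambda>x. ereal \<bar>enn2real (RN_deriv \<nu> \<nu>0 x)\<bar>) < \<infinity>"
  obtains e where "0 \<le> e" "esssup \<nu> (\<lambda>x. ereal \<bar>enn2real (RN_deriv \<nu> \<nu>0 x) - 1\<bar>) = ereal e"
    "\<And>G. G \<in> borel_measurable (borel :: ('a \<times> 'a) measure) \<Longrightarrow> (\<integral>\<^sup>+ x. G x \<partial>\<nu>0) \<le> ennreal (1 + e) * (\<integral>\<^sup>+ x. G x \<partial>\<nu>)"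
proof -
  interpret sf: sigma_finite_measure \<nu> by (rule prob_space_imp_sigma_finite[OF nu_prob])
  define h where "h x = enn2real (RN_deriv \<nu> \<nu>0 x)" for x
  have hm[measurable]: "h \<in> borel_measurable \<nu>" unfolding h_def by measurable
  define B where "B = esssup \<nu> (\<lambda>x. ereal \<bar>h x\<bar>)"
  have B0: "0 \<le> B" unfolding B_def by (rule esssup_nonneg_nu) simp
  have Bf: "B < \<infinity>" using bd unfolding B_def h_def .
  obtain b where b: "B = ereal b" using B0 Bf by (cases B) auto
  have aeB: "AE x in \<nu>. \<bar>h x\<bar> \<le> b"
    using esssup_AE[of "\<lambda>x. ereal \<bar>h x\<bar>" \<nu>] unfolding B_def[symmetric] b by simp
  define E where "E = esssup \<nu> (\<lambda>x. ereal \<bar>h x - 1\<bar>)"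
  have E0: "0 \<le> E" unfolding E_def by (rule esssup_nonneg_nu) simp
  have Eb: "E \<le> ereal (b + 1)" unfolding E_def
  proof (rule esssup_I)
    show "(\<lambda>x. ereal \<bar>h x - 1\<bar>) \<in> borel_measurable \<nu>" by measurable
    show "AE x in \<nu>. ereal \<bar>h x - 1\<bar> \<le> ereal (b + 1)" using aeB by eventually_elim auto
  qed
  obtain e where e: "E = ereal e" using E0 Eb by (cases E) auto
  have e0: "0 \<le> e" using E0 e by simp
  have aeE: "AE x in \<nu>. \<bar>h x - 1\<bar> \<le> e"
    using esssup_AE[of "\<lambda>x. ereal \<bar>h x - 1\<bar>" \<nu>] unfolding E_def[symmetric] e by simp
  have fin: "AE x in \<nu>. RN_deriv \<nu> \<nu>0 x \<noteq> \<infinity>"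
    by (rule sf.RN_deriv_finite[OF prob_space_imp_sigma_finite[OF p0] ac]) (simp add: s0 nu_sets)
  have aeR: "AE x in \<nu>. RN_deriv \<nu> \<nu>0 x \<le> ennreal (1 + e)"
    using aeE fin
  proof eventually_elim
    case (elim x)
    then have "RN_deriv \<nu> \<nu>0 x = ennreal (h x)" unfolding h_def by (simp add: less_top ennreal_enn2real)
    moreover have "h x \<le> 1 + e" using elim(1) by simp
    ultimately show ?case by (simp add: ennreal_leI)
  qed
  have dens: "density \<nu> (RN_deriv \<nu> \<nu>0) = \<nu>0"
    by (rule sf.density_RN_deriv[OF ac]) (simp add: s0 nu_sets)
  show ?thesis
  proof (rule that[OF e0])
    show "esssup \<nu> (\<lambda>x. ereal \<bar>enn2real (RN_deriv \<nu> \<nu>0 x) - 1\<bar>) = ereal e"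
      using e unfolding E_def h_def .
    fix G :: "'a \<times> 'a \<Rightarrow> ennreal" assume G: "G \<in> borel_measurable borel"
    then have Gn: "G \<in> borel_measurable \<nu>" by (simp add: meas_nu)
    have "(\<integral>\<^sup>+ x. G x \<partial>\<nu>0) = (\<integral>\<^sup>+ x. RN_deriv \<nu> \<nu>0 x * G x \<partial>\<nu>)"
      by (subst dens[symmetric], rule nn_integral_density) (simp_all add: Gn)
    also have "\<dots> \<le> (\<integral>\<^sup>+ x. ennreal (1 + e) * G x \<partial>\<nu>)"
      by (rule nn_integral_mono_AE) (use aeR in \<open>eventually_elim, auto intro: mult_right_mono\<close>)
    also have "\<dots> = ennreal (1 + e) * (\<integral>\<^sup>+ x. G x \<partial>\<nu>)"
      by (rule nn_integral_cmult[OF Gn])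
    finally show "(\<integral>\<^sup>+ x. G x \<partial>\<nu>0) \<le> ennreal (1 + e) * (\<integral>\<^sup>+ x. G x \<partial>\<nu>)" .
  qed
qed

end


lemma four_div_ereal: "(4::ereal) / ereal \<gamma> = (if \<gamma> = 0 then \<infinity> else ereal (4 / \<gamma>))"
  by simp

context stat begin

lemma mse_final:
  fixes nb N :: nat and g :: "'a \<times> 'a \<Rightarrow> real" and \<nu>0 :: "('a \<times> 'a) measure"
  assumes g: "g \<in> L2_0 \<nu>" and N: "1 \<le> N"
    and p0: "prob_space \<nu>0" and s0: "sets \<nu>0 = sets (borel :: ('a \<times> 'a) measure)"
    and ac: "absolutely_continuous \<nu> \<nu>0"
    and bd: "esssup \<nu> (\<lambda>x. ereal \<bar>enn2real (RN_deriv \<nu> \<nu>0 x)\<bar>) < \<infinity>"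
  shows "ereal (\<integral>\<omega>. (1 / real N * (\<Sum>n = 1..N. g (\<omega> (n + nb))))\<^sup>2 \<partial>chain_path borel \<nu>0 K (N + nb))
    \<le> (1 + 4 / ereal (pseudo_gap \<nu> K)
        + 2 * esssup \<nu> (\<lambda>x. ereal \<bar>enn2real (RN_deriv \<nu> \<nu>0 x) - 1\<bar>) * (1 + 4 / ereal (pseudo_gap \<nu> K)))
       * ereal (\<integral>x. (g x)\<^sup>2 \<partial>\<nu>) / ereal (real N)"
proof -
  obtain e where e0: "0 \<le> e" and e: "esssup \<nu> (\<lambda>x. ereal \<bar>enn2real (RN_deriv \<nu> \<nu>0 x) - 1\<bar>) = ereal e"
    and cmp: "\<And>G. G \<in> borel_measurable (borel :: ('a \<times> 'a) measure) \<Longrightarrow> (\<integral>\<^sup>+ x. G x \<partial>\<nu>0) \<le> ennreal (1 + e) * (\<integral>\<^sup>+ x. G x \<partial>\<nu>)"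
    using init_cmp[OF p0 s0 ac bd] by blast
  define Z where "Z \<omega> = 1 / real N * (\<Sum>n = 1..N. g (\<omega> (n + nb)))" for \<omega> :: "nat \<Rightarrow> 'a \<times> 'a"
  define T where "T = N + nb"
  define V where "V = (\<integral>x. (g x)\<^sup>2 \<partial>\<nu>)"
  define \<gamma> where "\<gamma> = pseudo_gap \<nu> K"
  have V0: "0 \<le> V" unfolding V_def by simp
  have gl: "l2 g" using g by (simp add: l2_0_iff)
  have gm: "g \<in> borel_measurable borel" using gl by (simp add: l2_def)
  have Zm: "Z \<in> borel_measurable (PiN T)"
    unfolding Z_def T_def
    by (intro borel_measurable_times borel_measurable_const borel_measurable_sum
        measurable_compose[OF comp_meas gm]) auto
  have Z2m: "(\<lambda>\<omega>. (Z \<omega>)\<^sup>2) \<in> borel_measurable (PiN T)" using Zm by measurable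
  have Zi: "integrable (cpn T) (\<lambda>\<omega>. (Z \<omega>)\<^sup>2)"
    unfolding Z_def T_def by (rule mse_stat_bound(1)[OF g N])
  define M\<nu> where "M\<nu> = (\<integral>\<omega>. (Z \<omega>)\<^sup>2 \<partial>cpn T)"
  have M\<nu>0: "0 \<le> M\<nu>" unfolding M\<nu>_def by simp
  have nnv: "(\<integral>\<^sup>+ \<omega>. ennreal ((Z \<omega>)\<^sup>2) \<partial>cpn T) = ennreal M\<nu>"
    unfolding M\<nu>_def by (rule nn_integral_eq_integral[OF Zi]) simp
  have nn0: "(\<integral>\<^sup>+ \<omega>. ennreal ((Z \<omega>)\<^sup>2) \<partial>chain_path borel \<nu>0 K T) \<le> ennreal (1 + e) * ennreal M\<nu>"
    unfolding nnv[symmetric]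
    apply (rule cp_compare[OF p0 s0 nu_prob nu_sets])
     apply (erule cmp)
    apply (rule measurable_compose[OF Z2m measurable_ennreal])
    done
  have s0T: "sets (chain_path borel \<nu>0 K T) = sets (PiN T)" by (rule cp_props(2)[OF p0 s0])
  have M0eq: "(\<integral>\<omega>. (Z \<omega>)\<^sup>2 \<partial>chain_path borel \<nu>0 K T) = enn2real (\<integral>\<^sup>+ \<omega>. ennreal ((Z \<omega>)\<^sup>2) \<partial>chain_path borel \<nu>0 K T)"
    by (rule integral_eq_nn_integral) (use Z2m in \<open>simp_all add: measurable_cong_sets[OF s0T refl]\<close>)
  have M0le: "(\<integral>\<omega>. (Z \<omega>)\<^sup>2 \<partial>chain_path borel \<nu>0 K T) \<le> (1 + e) * M\<nu>"
  proof -
    have "enn2real (\<integral>\<^sup>+ \<omega>. ennreal ((Z \<omega>)\<^sup>2) \<partial>chain_path borel \<nu>0 K T) \<le> enn2real (ennreal (1 + e) * ennreal M\<nu>)"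
      by (rule enn2real_mono[OF nn0]) (simp add: ennreal_mult_less_top)
    also have "ennreal (1 + e) * ennreal M\<nu> = ennreal ((1 + e) * M\<nu>)"
      by (rule ennreal_mult[symmetric]) (use e0 M\<nu>0 in auto)
    also have "enn2real (ennreal ((1 + e) * M\<nu>)) = (1 + e) * M\<nu>" using e0 M\<nu>0 by simp
    finally show ?thesis using M0eq by simp
  qed
  define MSE0 where "MSE0 = (\<integral>\<omega>. (Z \<omega>)\<^sup>2 \<partial>chain_path borel \<nu>0 K T)"
  have MSE0_0: "0 \<le> MSE0" unfolding MSE0_def by simp
  have goal_lhs: "(\<integral>\<omega>. (1 / real N * (\<Sum>n = 1..N. g (\<omega> (n + nb))))\<^sup>2 \<partial>chain_path borel \<nu>0 K (N + nb)) = MSE0"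
    unfolding MSE0_def Z_def T_def ..
  have Np: "0 < real N" using N by simp
  have gam0: "0 \<le> \<gamma>" unfolding \<gamma>_def by (rule pg_nonneg)
  show ?thesis
    unfolding goal_lhs e V_def[symmetric] \<gamma>_def[symmetric]
  proof (cases "V = 0")
    case True
    have "M\<nu> \<le> 2 * V" unfolding M\<nu>_def Z_def T_def V_def by (rule mse_stat_triv[OF g N])
    then have "M\<nu> = 0" using True M\<nu>0 by simp
    then have "MSE0 = 0" using M0le MSE0_0 unfolding MSE0_def by simp
    then show "ereal MSE0 \<le> (1 + 4 / ereal \<gamma> + 2 * ereal e * (1 + 4 / ereal \<gamma>)) * ereal V / ereal (real N)"
      using True by simp
  next
    case False
    then have Vp: "0 < V" using V0 by simp
    show "ereal MSE0 \<le> (1 + 4 / ereal \<gamma> + 2 * ereal e * (1 + 4 / ereal \<gamma>)) * ereal V / ereal (real N)"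
    proof (cases "\<gamma> = 0")
      case True
      have X: "(1 + 4 / ereal \<gamma> + 2 * ereal e * (1 + 4 / ereal \<gamma>)) = \<infinity>"
        using True e0 by (simp add: four_div_ereal)
      have "(1 + 4 / ereal \<gamma> + 2 * ereal e * (1 + 4 / ereal \<gamma>)) * ereal V / ereal (real N) = \<infinity>"
        unfolding X using Vp Np by simp
      then show ?thesis by simp
    next
      case False
      then have gp: "0 < \<gamma>" using gam0 by simp
      have "M\<nu> \<le> 4 * V / (\<gamma> * real N)"
        unfolding M\<nu>_def Z_def T_def V_def \<gamma>_def by (rule mse_stat_gap[OF g N]) (use gp \<gamma>_def in simp)
      then have "(1 + e) * M\<nu> \<le> (1 + e) * (4 * V / (\<gamma> * real N))"
        using e0 by (intro mult_left_mono) auto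
      then have "MSE0 \<le> (1 + e) * (4 * V / (\<gamma> * real N))"
        using M0le unfolding MSE0_def by linarith
      also have "\<dots> \<le> (1 + 4 / \<gamma> + 2 * e * (1 + 4 / \<gamma>)) * V / real N"
      proof -
        have "(1 + e) * (4 * V / (\<gamma> * real N)) = (1 + e) * (4 / \<gamma>) * (V / real N)" by (simp add: field_simps)
        also have "\<dots> \<le> (1 + 4 / \<gamma> + 2 * e * (1 + 4 / \<gamma>)) * (V / real N)"
        proof (rule mult_right_mono)
          have "0 \<le> 4 / \<gamma>" using gp by simp
          then have p: "0 \<le> e * (4 / \<gamma>)" using e0 by simp
          have a: "(1 + e) * (4 / \<gamma>) = 4 / \<gamma> + e * (4 / \<gamma>)" by (rule distrib_right[of 1 e, simplified])
          have b: "1 + 4 / \<gamma> + 2 * e * (1 + 4 / \<gamma>) = 1 + 4 / \<gamma> + 2 * e + 2 * (e * (4 / \<gamma>))"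
            by (simp add: algebra_simps)
          show "(1 + e) * (4 / \<gamma>) \<le> 1 + 4 / \<gamma> + 2 * e * (1 + 4 / \<gamma>)"
            unfolding a b using p e0 by linarith
          show "0 \<le> V / real N" using V0 Np by simp
        qed
        finally show ?thesis by simp
      qed
      finally have le: "MSE0 \<le> (1 + 4 / \<gamma> + 2 * e * (1 + 4 / \<gamma>)) * V / real N" .
      have "(1 + 4 / ereal \<gamma> + 2 * ereal e * (1 + 4 / ereal \<gamma>)) * ereal V / ereal (real N)
          = ereal ((1 + 4 / \<gamma> + 2 * e * (1 + 4 / \<gamma>)) * V / real N)"
        using False Np by (simp add: four_div_ereal)
      then show ?thesis using le by simp
    qed
  qed
qed

end


theorem mainTheorem8:
  fixes mu :: "'a::{banach, second_countable_topology} measure"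
    and pi :: "nat \<Rightarrow> 'a \<Rightarrow> real"
    and Q :: "nat \<Rightarrow> 'a \<Rightarrow> real"
    and L l :: nat
    and \<nu> \<nu>0 :: "('a \<times> 'a) measure"
    and Y :: "'a \<times> 'a \<Rightarrow> real"
    and N nb :: nat
  assumes prior: "prob_space mu" "sets mu = sets borel"
    and post_dens: "\<And>j. j \<le> L \<Longrightarrow> pi j \<in> borel_measurable borel \<and> (\<forall>x. 0 \<le> pi j x)
                        \<and> integrable mu (pi j) \<and> (\<integral>x. pi j x \<partial>mu) = 1"
    and prop_dens: "\<And>k. k \<in> {1..L} \<Longrightarrow> Q k \<in> borel_measurable borel \<and> (\<forall>x. 0 \<le> Q k x)
                        \<and> integrable mu (Q k) \<and> (\<integral>x. Q k x \<partial>mu) = 1"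
    and A11: "\<And>k. k \<in> {1..L} \<Longrightarrow> continuous_on UNIV (Q k) \<and> (\<forall>x. 0 < Q k x)"
    and A12: "\<And>j. j \<le> L \<Longrightarrow> continuous_on UNIV (pi j) \<and> (\<forall>x. 0 < pi j x)"
    and A13: "\<And>k j c. k \<in> {1..L} \<Longrightarrow> j \<in> {k - 1, k} \<Longrightarrow> 0 < c \<Longrightarrow>
                 compact {\<theta>. Q k \<theta> / pi j \<theta> \<le> c}"
    and A14: "\<exists>c. 0 < c \<and> c < 1 \<and> (\<forall>k \<in> {1..L}. \<forall>j \<in> {k - 1, k}.
                 AE z in mu. c \<le> Q k z / pi j z)"
    and A15: "\<exists>r > 1. \<exists>Cr. \<forall>k \<in> {1..L}.
                 integrable mu (\<lambda>z. Q k z powr r) \<and> (\<integral>z. Q k z powr r \<partial>mu) \<le> Cr"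
    and lev: "l \<in> {1..L}"
    and inv: "invariant_prob borel (coupled_kernel mu (Q l) (pi (l - 1)) (pi l)) \<nu>"
    and Y_L2: "Y \<in> borel_measurable borel" "integrable \<nu> (\<lambda>x. (Y x)\<^sup>2)"
    and init: "prob_space \<nu>0" "sets \<nu>0 = sets borel" "absolutely_continuous \<nu> \<nu>0"
              "esssup \<nu> (\<lambda>x. ereal \<bar>enn2real (RN_deriv \<nu> \<nu>0 x)\<bar>) < \<infinity>"
    and N: "1 \<le> N"
  shows "(let K = coupled_kernel mu (Q l) (pi (l - 1)) (pi l);
              g = (\<lambda>\<theta>. Y \<theta> - (\<integral>x. Y x \<partial>\<nu>));
              MSE = (\<integral>\<omega>. (1 / real N * (\<Sum>n = 1..N. g (\<omega> (n + nb))))\<^sup>2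
                        \<partial>(chain_path borel \<nu>0 K (N + nb)));
              V = (\<integral>x. (Y x - (\<integral>y. Y y \<partial>\<nu>))\<^sup>2 \<partial>\<nu>);
              \<gamma> = pseudo_gap \<nu> K;
              Cinv = 1 + 4 / ereal \<gamma>;
              Cns = 2 * esssup \<nu> (\<lambda>x. ereal \<bar>enn2real (RN_deriv \<nu> \<nu>0 x) - 1\<bar>) * (1 + 4 / ereal \<gamma>)
          in ereal MSE \<le> (Cinv + Cns) * ereal V / ereal (real N))"
proof -
  have l1: "l - 1 \<le> L" "l \<le> L" using lev by auto
  have ck: "ckern mu (Q l) (pi (l - 1)) (pi l)"
  proof (rule ckern.intro)
    show "prob_space mu" "sets mu = sets borel" by (fact prior(1), fact prior(2))
    show "Q l \<in> borel_measurable borel" using prop_dens[OF lev] by simp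
    show "pi (l - 1) \<in> borel_measurable borel" using post_dens[OF l1(1)] by simp
    show "pi l \<in> borel_measurable borel" using post_dens[OF l1(2)] by simp
    show "0 < Q l x" for x using A11[OF lev] by simp
    show "0 < pi (l - 1) x" for x using A12[OF l1(1)] by simp
    show "0 < pi l x" for x using A12[OF l1(2)] by simp
    show "integrable mu (Q l)" "(\<integral>x. Q l x \<partial>mu) = 1" using prop_dens[OF lev] by simp_all
  qed
  have st: "stat mu (Q l) (pi (l - 1)) (pi l) \<nu>"
    by (rule stat.intro[OF ck]) (rule stat_axioms.intro, fact inv)
  interpret stat mu "Q l" "pi (l - 1)" "pi l" \<nu> by (fact st)
  define c where "c = (\<integral>x. Y x \<partial>\<nu>)"
  define g where "g = (\<lambda>\<theta>. Y \<theta> - c)"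
  have Ym: "Y \<in> borel_measurable \<nu>" using Y_L2(1) by (simp add: meas_nu)
  have Yi: "integrable \<nu> Y"
    by (rule sq_integrable_imp_integrable[OF prob_space.finite_measure[OF nu_prob] Ym Y_L2(2)])
  interpret pn: prob_space \<nu> by (rule nu_prob)
  have gsq: "(\<lambda>x. (g x)\<^sup>2) = (\<lambda>x. (Y x)\<^sup>2 + c\<^sup>2 - 2 * c * Y x)"
    by (simp add: g_def fun_eq_iff power2_diff algebra_simps)
  have gL: "g \<in> L2_0 \<nu>"
    unfolding L2_0_def mem_Collect_eq
  proof (intro conjI)
    show "g \<in> borel_measurable \<nu>" unfolding g_def using Ym by simp
    show "integrable \<nu> (\<lambda>x. (g x)\<^sup>2)" unfolding gsq using Y_L2(2) Yi by simp
    have "(\<integral>x. g x \<partial>\<nu>) = (\<integral>x. Y x \<partial>\<nu>) - (\<integral>x. c \<partial>\<nu>)"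
      unfolding g_def by (rule Bochner_Integration.integral_diff[OF Yi]) simp
    also have "\<dots> = 0" by (simp add: c_def pn.prob_space)
    finally show "(\<integral>x. g x \<partial>\<nu>) = 0" .
  qed
  have main: "ereal (\<integral>\<omega>. (1 / real N * (\<Sum>n = 1..N. g (\<omega> (n + nb))))\<^sup>2 \<partial>chain_path borel \<nu>0 K (N + nb))
    \<le> (1 + 4 / ereal (pseudo_gap \<nu> K)
        + 2 * esssup \<nu> (\<lambda>x. ereal \<bar>enn2real (RN_deriv \<nu> \<nu>0 x) - 1\<bar>) * (1 + 4 / ereal (pseudo_gap \<nu> K)))
       * ereal (\<integral>x. (g x)\<^sup>2 \<partial>\<nu>) / ereal (real N)"
    by (rule mse_final[OF gL N init(1) init(2) init(3) init(4)])
  show ?thesis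
    unfolding Let_def using main unfolding g_def c_def .
qed

end
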